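(* For all $n\geq 0$: $d_7(4n+2)\equiv 0\pmod 4$, $d_7(8n+5)\equiv 0\pmod 4$, $d_7(16n+9)\equiv 0\pmod 4$, $d_7(4n+3)\equiv 0\pmod 8$, and $d_7(8n+4)\equiv 0\pmod 8$.
   Context: For each integer $k\geq 1$, the numbers $d_k(n)$ are defined by $\sum_{n\geq 0} d_k(n)q^n = \frac{f_2^k}{f_1^{3k+1}}$, where $f_r = \prod_{i\geq 1}(1-q^{ri})$. *)

theory Defs
  imports "HOL-Computational_Algebra.Formal_Power_Series"
begin

text \<open>Truncated Euler product  f_r^{(N)} = prod_{i=1..N} (1 - q^{r i})  as a formal power series
  over the integers. For any N \<ge> n, the coefficient of q^n of an expression in the f_r
  (r \<ge> 1) agrees with that computed from the infinite products.\<close>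
definition euler_trunc :: "nat \<Rightarrow> nat \<Rightarrow> int fps" where
  "euler_trunc N r = (\<Prod>i\<in>{1..N}. 1 - fps_X ^ (r * i))"

text \<open>d_k(n) = [q^n] f_2^k / f_1^(3k+1).\<close>
definition d :: "nat \<Rightarrow> nat \<Rightarrow> int" where
  "d k n = fps_nth (euler_trunc n 2 ^ k * fps_right_inverse (euler_trunc n 1) 1 ^ (3 * k + 1)) n"

end

theory Submission
  imports Defs
begin

unbundle fps_syntax



definition eqN :: "nat \<Rightarrow> int fps \<Rightarrow> int fps \<Rightarrow> bool" where
  "eqN N a b \<longleftrightarrow> (\<forall>i\<le>N. a$i = b$i)"

lemma eqN_refl[simp]: "eqN N a a" by (simp add: eqN_def)
lemma eqN_sym: "eqN N a b \<Longrightarrow> eqN N b a" by (simp add: eqN_def)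
lemma eqN_trans: "eqN N a b \<Longrightarrow> eqN N b c \<Longrightarrow> eqN N a c" by (simp add: eqN_def)
lemma eqN_mono: "eqN N a b \<Longrightarrow> M \<le> N \<Longrightarrow> eqN M a b" by (simp add: eqN_def)
lemma eqN_add: "eqN N a b \<Longrightarrow> eqN N c e \<Longrightarrow> eqN N (a+c) (b+e)" by (simp add: eqN_def)
lemma eqN_diff: "eqN N a b \<Longrightarrow> eqN N c e \<Longrightarrow> eqN N (a-c) (b-e)" by (simp add: eqN_def)
lemma eqN_mult: "eqN N a b \<Longrightarrow> eqN N c e \<Longrightarrow> eqN N (a*c) (b*e)"
  by (auto simp: eqN_def fps_mult_nth intro!: sum.cong)
lemma eqN_power: "eqN N a b \<Longrightarrow> eqN N (a^k) (b^k)"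
  by (induction k) (auto intro: eqN_mult)
lemma eqN_eq: "(\<And>N. eqN N a b) \<Longrightarrow> a = b"
  by (auto simp: eqN_def fps_eq_iff)
lemma eqN_sum: "(\<And>k. k \<in> S \<Longrightarrow> eqN N (f k) (g k)) \<Longrightarrow> eqN N (sum f S) (sum g S)"
  by (auto simp: eqN_def fps_sum_nth intro!: sum.cong)

lemma eqN_inv:
  assumes "a * ia = 1" "b * ib = 1" "eqN N a b"
  shows "eqN N ia ib"
proof -
  have "ia - ib = ia * ib * (b - a)"
    using assms(1,2) by (simp add: algebra_simps)
  moreover have "eqN N (ia * ib * (b - a)) (ia * ib * 0)"
    by (rule eqN_mult) (use assms(3) in \<open>auto simp: eqN_def\<close>)
  ultimately have "eqN N (ia - ib) 0" by simp
  thus ?thesis by (simp add: eqN_def)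
qed

definition iv :: "int fps \<Rightarrow> int fps" where "iv a = fps_right_inverse a 1"

lemma iv_right: "a$0 = 1 \<Longrightarrow> a * iv a = 1"
  unfolding iv_def by (rule fps_right_inverse) simp

lemma iv_left: "a$0 = 1 \<Longrightarrow> iv a * a = 1"
  using iv_right by (simp add: mult.commute)

lemma iv_unique: "a$0 = 1 \<Longrightarrow> a * b = 1 \<Longrightarrow> iv a = b"
  by (metis iv_left mult.assoc mult_1_left mult_1_right)

lemma prod_nth0: "(prod f S :: int fps) $ 0 = prod (\<lambda>i. f i $ 0) S"
  by (induction S rule: infinite_finite_induct) (auto simp: fps_mult_nth_0)

definition dil :: "nat \<Rightarrow> int fps \<Rightarrow> int fps" where
  "dil k a = Abs_fps (\<lambda>n. if k dvd n then a $ (n div k) else 0)"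

lemma dil_nth: "dil k a $ n = (if k dvd n then a $ (n div k) else 0)"
  by (simp add: dil_def)

lemma dil_nth_mult[simp]: "k > 0 \<Longrightarrow> dil k a $ (k * m) = a $ m"
  by (simp add: dil_def)

lemma dil_nth_ndvd: "\<not> k dvd n \<Longrightarrow> dil k a $ n = 0"
  by (simp add: dil_def)

lemma dil_compose: assumes "k > 0" shows "dil k a = a oo fps_X ^ k"
proof (rule fps_ext)
  fix n
  have "(a oo fps_X ^ k) $ n = (\<Sum>i=0..n. if i = n div k \<and> k dvd n then a $ i else 0)"
    unfolding fps_compose_nth
    by (intro sum.cong refl) (use assms in \<open>auto simp: power_mult[symmetric] fps_X_power_nth\<close>)
  also have "\<dots> = dil k a $ n"
  proof (cases "k dvd n")
    case True
    have "(\<Sum>i=0..n. if i = n div k \<and> k dvd n then a $ i else 0) = (\<Sum>i=0..n. if n div k = i then a $ i else 0)"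
      using True by (intro sum.cong) auto
    also have "\<dots> = a $ (n div k)" by (simp add: sum.delta)
    finally show ?thesis using True by (simp add: dil_nth)
  qed (simp add: dil_nth)
  finally show "dil k a $ n = (a oo fps_X ^ k) $ n" ..
qed

lemma X_pow0: "k > 0 \<Longrightarrow> (fps_X ^ k :: int fps) $ 0 = 0"
  by simp

lemma dil_mult: "k > 0 \<Longrightarrow> dil k (a * b) = dil k a * dil k b"
  by (simp add: dil_compose fps_compose_mult_distrib)
lemma dil_add: "dil k (a + b) = dil k a + dil k b"
  by (rule fps_ext) (simp add: dil_nth)
lemma dil_diff: "dil k (a - b) = dil k a - dil k b"
  by (rule fps_ext) (simp add: dil_nth)
lemma dil_uminus: "dil k (- a) = - dil k a"
  by (rule fps_ext) (simp add: dil_nth)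
lemma dil_1[simp]: "k > 0 \<Longrightarrow> dil k 1 = 1"
  by (rule fps_ext) (auto simp: dil_nth)
lemma dil_0[simp]: "dil k 0 = 0"
  by (rule fps_ext) (auto simp: dil_nth)
lemma dil_const: "k > 0 \<Longrightarrow> dil k (fps_const c) = fps_const c"
  by (rule fps_ext) (auto simp: dil_nth)
lemma dil_power: "k > 0 \<Longrightarrow> dil k (a ^ m) = dil k a ^ m"
  by (induction m) (auto simp: dil_mult)
lemma dil_X_power: "k > 0 \<Longrightarrow> dil k (fps_X ^ m) = fps_X ^ (k * m)"
  by (rule fps_ext) (auto simp: dil_nth)
lemma dil_prod: "k > 0 \<Longrightarrow> dil k (prod f S) = prod (\<lambda>i. dil k (f i)) S"
  by (induction S rule: infinite_finite_induct) (auto simp: dil_mult)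
lemma dil_nth0[simp]: "dil k a $ 0 = a $ 0"
  by (simp add: dil_nth)
lemma dil_iv: "k > 0 \<Longrightarrow> a $ 0 = 1 \<Longrightarrow> dil k (iv a) = iv (dil k a)"
  by (rule iv_unique[symmetric]) (auto simp: dil_mult[symmetric] iv_right)
lemma dil_dil: "k > 0 \<Longrightarrow> l > 0 \<Longrightarrow> dil k (dil l a) = dil (k * l) a"
  by (rule fps_ext) (auto simp: dil_nth div_mult2_eq mult.commute dvd_mult_imp_div
        dest: dvd_mult_left dvd_mult_right)
lemma dil_one_id[simp]: "dil 1 a = a"
  by (rule fps_ext) (simp add: dil_nth)
lemma dil_eqN: "k > 0 \<Longrightarrow> eqN N a b \<Longrightarrow> eqN N (dil k a) (dil k b)"
  by (auto simp: eqN_def dil_nth intro: div_le_dividend[THEN order_trans])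

definition neg :: "int fps \<Rightarrow> int fps" where
  "neg a = Abs_fps (\<lambda>n. (-1) ^ n * a $ n)"

lemma neg_nth: "neg a $ n = (-1) ^ n * a $ n" by (simp add: neg_def)

lemma negX_power_nth: "((- fps_X :: int fps) ^ i) $ n = (if n = i then (-1)^i else 0)"
proof -
  have "(- fps_X :: int fps) ^ i = (-1) ^ i * fps_X ^ i" by (simp add: power_minus')
  also have "((-1::int fps) ^ i) = fps_const ((-1)^i)" by (simp add: fps_const_power[symmetric] fps_const_neg[symmetric])
  finally show ?thesis by simp
qed

lemma neg_compose: "neg a = a oo (- fps_X)"
proof (rule fps_ext)
  fix n
  have "(a oo - fps_X) $ n = (\<Sum>i=0..n. if n = i then (-1)^n * a $ i else 0)"
    unfolding fps_compose_nth
    by (intro sum.cong refl) (auto simp: negX_power_nth)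
  also have "\<dots> = neg a $ n" by (simp add: sum.delta neg_nth)
  finally show "neg a $ n = (a oo - fps_X) $ n" ..
qed

lemma neg_mult: "neg (a * b) = neg a * neg b"
  by (simp add: neg_compose fps_compose_mult_distrib)
lemma neg_1[simp]: "neg 1 = 1"
  by (rule fps_ext) (simp add: neg_nth)
lemma neg_power: "neg (a ^ m) = neg a ^ m"
  by (induction m) (auto simp: neg_mult)
lemma neg_neg[simp]: "neg (neg a) = a"
  by (rule fps_ext) (simp add: neg_nth)
lemma neg_add: "neg (a + b) = neg a + neg b"
  by (rule fps_ext) (simp add: neg_nth algebra_simps)
lemma neg_diff: "neg (a - b) = neg a - neg b"
  by (rule fps_ext) (simp add: neg_nth algebra_simps)


lemma et_Suc: "euler_trunc (Suc M) r = euler_trunc M r * (1 - fps_X ^ (r * Suc M))"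
  unfolding euler_trunc_def by (simp add: prod.nat_ivl_Suc')

lemma et_0: "euler_trunc M 1 $ 0 = 1"
  by (simp add: euler_trunc_def prod_nth0)

lemma et_ext: "N \<le> M \<Longrightarrow> eqN N (euler_trunc N 1) (euler_trunc M 1)"
proof (induction M rule: dec_induct)
  case (step m)
  have "eqN N (euler_trunc m 1) (euler_trunc (Suc m) 1)"
    unfolding eqN_def et_Suc
  proof (intro allI impI)
    fix i assume "i \<le> N"
    hence "i < Suc m" using step(1) by simp
    thus "euler_trunc m 1 $ i = (euler_trunc m 1 * (1 - fps_X ^ (1 * Suc m))) $ i"
      by (simp only: right_diff_distrib mult_1_right fps_sub_nth fps_X_power_mult_right_nth) simp
  qed
  thus ?case using step(3) eqN_trans by blast
qed simp
definition F1 :: "int fps" where "F1 = Abs_fps (\<lambda>i. euler_trunc i 1 $ i)"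
definition F :: "nat \<Rightarrow> int fps" where "F r = dil r F1"

lemma F1_eqN: assumes "N \<le> M" shows "eqN N (euler_trunc M 1) F1"
  unfolding eqN_def
proof (intro allI impI)
  fix i assume i: "i \<le> N"
  have "eqN i (euler_trunc i 1) (euler_trunc M 1)" using i assms by (intro et_ext) simp
  thus "euler_trunc M 1 $ i = F1 $ i" by (simp add: eqN_def F1_def)
qed

lemma et_dil: "r > 0 \<Longrightarrow> euler_trunc n r = dil r (euler_trunc n 1)"
  unfolding euler_trunc_def by (simp add: dil_prod dil_diff dil_X_power)

lemma F_eqN: "r > 0 \<Longrightarrow> N \<le> M \<Longrightarrow> eqN N (euler_trunc M r) (F r)"
  unfolding F_def by (subst et_dil[of r M]) (assumption, rule dil_eqN, assumption, rule F1_eqN)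

lemma F_0[simp]: "F r $ 0 = 1"
proof -
  have "eqN 0 (euler_trunc 0 1) F1" by (rule F1_eqN) simp
  hence "F1 $ 0 = 1" using et_0[of 0] unfolding eqN_def by (metis order_refl)
  thus ?thesis by (simp add: F_def)
qed

lemma F_dil: "k > 0 \<Longrightarrow> r > 0 \<Longrightarrow> dil k (F r) = F (k * r)"
  by (simp add: F_def dil_dil)

lemma d_char: "d k n = (F 2 ^ k * iv (F 1) ^ (3 * k + 1)) $ n"
proof -
  have e1: "eqN n (euler_trunc n 2) (F 2)" by (rule F_eqN) auto
  have e2: "eqN n (euler_trunc n 1) (F 1)" by (rule F_eqN) auto
  have e3: "eqN n (fps_right_inverse (euler_trunc n 1) 1) (iv (F 1))"
    unfolding iv_def[symmetric] by (rule eqN_inv[OF iv_right iv_right e2]) (rule et_0, simp)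
  have "eqN n (euler_trunc n 2 ^ k * fps_right_inverse (euler_trunc n 1) 1 ^ (3 * k + 1))
          (F 2 ^ k * iv (F 1) ^ (3 * k + 1))"
    by (intro eqN_mult eqN_power e1 e3)
  thus ?thesis by (simp add: d_def eqN_def)
qed



definition mdv :: "int \<Rightarrow> int fps \<Rightarrow> bool" where "mdv m a \<longleftrightarrow> (\<forall>i. m dvd a $ i)"
definition cg :: "int \<Rightarrow> int fps \<Rightarrow> int fps \<Rightarrow> bool" where "cg m a b \<longleftrightarrow> mdv m (a - b)"

lemma mdv_mult: "mdv m a \<Longrightarrow> mdv m (a * b)"
  by (auto simp: mdv_def fps_mult_nth intro!: dvd_sum)
lemma mdv_mult2: "mdv m b \<Longrightarrow> mdv m (a * b)"
  using mdv_mult[of m b a] by (simp add: mult.commute)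
lemma mdv_add: "mdv m a \<Longrightarrow> mdv m b \<Longrightarrow> mdv m (a + b)"
  by (auto simp: mdv_def)
lemma mdv_diff: "mdv m a \<Longrightarrow> mdv m b \<Longrightarrow> mdv m (a - b)"
  by (auto simp: mdv_def)
lemma mdv_0[simp]: "mdv m 0" by (simp add: mdv_def)

lemma cg_refl[simp]: "cg m a a" by (simp add: cg_def)
lemma cg_sym: "cg m a b \<Longrightarrow> cg m b a"
  unfolding cg_def mdv_def by (metis dvd_minus_iff fps_sub_nth minus_diff_eq)
lemma cg_trans: "cg m a b \<Longrightarrow> cg m b c \<Longrightarrow> cg m a c"
  unfolding cg_def using mdv_add by fastforce
lemma cg_add: "cg m a b \<Longrightarrow> cg m c e \<Longrightarrow> cg m (a + c) (b + e)"
  unfolding cg_def using mdv_add by (fastforce simp: algebra_simps)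
lemma cg_diff: "cg m a b \<Longrightarrow> cg m c e \<Longrightarrow> cg m (a - c) (b - e)"
  unfolding cg_def using mdv_diff by (fastforce simp: algebra_simps)
lemma cg_mult: "cg m a b \<Longrightarrow> cg m c e \<Longrightarrow> cg m (a * c) (b * e)"
proof -
  assume "cg m a b" "cg m c e"
  hence "mdv m ((a - b) * c + b * (c - e))" unfolding cg_def
    by (intro mdv_add mdv_mult mdv_mult2)
  thus ?thesis by (simp add: cg_def algebra_simps)
qed
lemma cg_power: "cg m a b \<Longrightarrow> cg m (a ^ k) (b ^ k)"
  by (induction k) (auto intro: cg_mult)
lemma cg_multL: "cg m a b \<Longrightarrow> cg m (c * a) (c * b)"
  by (rule cg_mult) auto
lemma cg_multR: "cg m a b \<Longrightarrow> cg m (a * c) (b * c)"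
  by (rule cg_mult) auto
lemma cg_iv: assumes "a $ 0 = 1" "b $ 0 = 1" "cg m a b" shows "cg m (iv a) (iv b)"
proof -
  have "iv a - iv b = iv a * iv b * (b - a)"
    using iv_right[OF assms(1)] iv_right[OF assms(2)] by (simp add: algebra_simps)
  moreover have "mdv m (iv a * iv b * (b - a))"
    using assms(3) cg_sym[OF assms(3)] by (intro mdv_mult2) (simp add: cg_def)
  ultimately show ?thesis by (simp add: cg_def)
qed
lemma cg_dvd: "cg (m * k) a b \<Longrightarrow> cg m a b"
  unfolding cg_def mdv_def using dvd_mult_left by blast
lemma cg_nth: "cg m a b \<Longrightarrow> m dvd (a $ i - b $ i)"
  by (auto simp: cg_def mdv_def)
lemma cg_nth0: "cg m a b \<Longrightarrow> b $ i = 0 \<Longrightarrow> m dvd a $ i"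
  using cg_nth[of m a b i] by simp
lemma cg_dil: "cg m a b \<Longrightarrow> cg m (dil k a) (dil k b)"
  by (auto simp: cg_def mdv_def dil_nth simp flip: dil_diff)
lemma cg_neg: "cg m a b \<Longrightarrow> cg m (neg a) (neg b)"
  by (auto simp: cg_def mdv_def neg_nth simp flip: neg_diff)
lemma mdv_mult_both: "mdv m a \<Longrightarrow> mdv n b \<Longrightarrow> mdv (m * n) (a * b)"
  by (auto simp: mdv_def fps_mult_nth intro!: dvd_sum mult_dvd_mono)
lemma mdv_double: assumes "mdv m a" shows "mdv (2 * m) (a + a)"
  unfolding mdv_def fps_add_nth
proof
  fix i
  from assms have "m dvd a $ i" by (simp add: mdv_def)
  thus "2 * m dvd a $ i + a $ i" by (metis mult_2 mult_dvd_mono dvd_refl)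
qed
lemma mdv_dvd: "mdv m a \<Longrightarrow> k dvd m \<Longrightarrow> mdv k a"
  by (auto simp: mdv_def intro: dvd_trans)

lemma cg_sq: assumes "cg m a b" "even m" shows "cg (2 * m) (a ^ 2) (b ^ 2)"
proof -
  have e: "a ^ 2 - b ^ 2 = (a - b) * (a - b) + (b * (a - b) + b * (a - b))"
    by (simp add: power2_eq_square algebra_simps)
  have m: "mdv m (a - b)" using assms(1) by (simp add: cg_def)
  have "mdv (m * m) ((a - b) * (a - b))" by (rule mdv_mult_both[OF m m])
  hence 1: "mdv (2 * m) ((a - b) * (a - b))" by (rule mdv_dvd) (use assms(2) in auto)
  have 2: "mdv (2 * m) (b * (a - b) + b * (a - b))" by (intro mdv_double mdv_mult2 m)
  show ?thesis unfolding cg_def e by (rule mdv_add[OF 1 2])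
qed
lemma cg_const: "cg m (fps_const (m * c) * a) 0"
  by (simp add: cg_def mdv_def)
lemma cg_lim: assumes "\<And>N. \<exists>a' b'. eqN N a a' \<and> eqN N b b' \<and> cg m a' b'" shows "cg m a b"
  unfolding cg_def mdv_def
proof
  fix i
  obtain a' b' where "eqN i a a'" "eqN i b b'" "cg m a' b'" using assms by blast
  thus "m dvd (a - b) $ i" by (auto simp: eqN_def cg_def mdv_def)
qed
lemma cg_prod: "(\<And>i. i \<in> S \<Longrightarrow> cg m (f i) (g i)) \<Longrightarrow> cg m (prod f S) (prod g S)"
  by (induction S rule: infinite_finite_induct) (auto intro: cg_mult)

lemma F_sq1: "cg 2 (F 1 ^ 2) (F 2)"
proof (rule cg_lim)
  fix N
  have ee: "euler_trunc N 1 ^ 2 = (\<Prod>i=1..N. (1 - fps_X ^ (1 * i)) ^ 2)"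
    by (simp add: euler_trunc_def prod_power_distrib)
  have "cg 2 (euler_trunc N 1 ^ 2) (euler_trunc N 2)"
    unfolding ee unfolding euler_trunc_def
  proof (rule cg_prod)
    fix i :: nat
    have x2: "(fps_X ^ (2 * i) :: int fps) = (fps_X ^ i) ^ 2" by (simp add: power_mult mult.commute)
    have r: "(1 - x) ^ 2 - (1 - x ^ 2) = (x ^ 2 - x) + (x ^ 2 - x)" for x :: "int fps"
      by (simp add: power2_eq_square algebra_simps)
    have "mdv (2 * 1) (((fps_X ^ i) ^ 2 - fps_X ^ i) + ((fps_X ^ i) ^ 2 - fps_X ^ i))"
      by (rule mdv_double) (simp add: mdv_def)
    hence "mdv 2 (((fps_X ^ i) ^ 2 - fps_X ^ i) + ((fps_X ^ i) ^ 2 - fps_X ^ i))"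
      by (simp only: mult_1_right)
    thus "cg 2 ((1 - fps_X ^ (1 * i)) ^ 2) (1 - fps_X ^ (2 * i))"
      unfolding cg_def x2 mult_1 r .
  qed
  moreover have "eqN N (euler_trunc N 1 ^ 2) (F 1 ^ 2)" by (intro eqN_power F_eqN) auto
  moreover have "eqN N (euler_trunc N 2) (F 2)" by (intro F_eqN) auto
  ultimately show "\<exists>a' b'. eqN N (F 1 ^ 2) a' \<and> eqN N (F 2) b' \<and> cg 2 a' b'"
    by (meson eqN_sym)
qed

lemma F_sq: "r > 0 \<Longrightarrow> cg 2 (F r ^ 2) (F (2 * r))"
proof -
  assume r: "r > 0"
  have "cg 2 (dil r (F 1 ^ 2)) (dil r (F 2))" by (rule cg_dil[OF F_sq1])
  thus ?thesis using r by (simp add: dil_power F_dil mult.commute)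
qed


fun gb :: "'a::comm_ring_1 \<Rightarrow> nat \<Rightarrow> nat \<Rightarrow> 'a" where
  "gb p 0 k = (if k = 0 then 1 else 0)"
| "gb p (Suc N) 0 = 1"
| "gb p (Suc N) (Suc k) = gb p N k + p ^ Suc k * gb p N (Suc k)"

lemma pow_eq: "a + b = c \<Longrightarrow> (p::'a::comm_ring_1) ^ a * p ^ b = p ^ c"
  by (metis power_add)

lemma gb_zero: "N < k \<Longrightarrow> gb p N k = 0"
proof (induction N arbitrary: k)
  case (Suc N)
  then obtain j where "k = Suc j" by (cases k) auto
  with Suc show ?case by simp
qed simp

lemma gb_0[simp]: "gb p N 0 = 1" by (cases N) auto

lemma gb_pascal2: "gb p (Suc N) (Suc k) = p ^ (N - k) * gb p N k + gb p N (Suc k)"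
proof (induction N arbitrary: k)
  case 0
  then show ?case by (cases k) auto
next
  case (Suc N)
  show ?case
  proof (cases k)
    case 0
    have i0: "gb p (Suc N) 1 = p ^ N + gb p N 1" using Suc[of 0] by simp
    have d0: "gb p (Suc N) 1 = 1 + p * gb p N 1" by simp
    show ?thesis using i0 d0 0 by (simp add: algebra_simps)
  next
    case (Suc j)
    note IH = Suc.IH
    have A: "gb p (Suc (Suc N)) (Suc (Suc j)) = gb p (Suc N) (Suc j) + p ^ Suc (Suc j) * gb p (Suc N) (Suc (Suc j))"
      by simp
    have L: "gb p (Suc (Suc N)) (Suc (Suc j)) = (p ^ (N - j) * gb p N j + gb p N (Suc j))
       + p ^ Suc (Suc j) * (p ^ (N - Suc j) * gb p N (Suc j) + gb p N (Suc (Suc j)))"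
      unfolding A IH[of j] IH[of "Suc j"] ..
    have R: "p ^ (Suc N - k) * gb p (Suc N) k + gb p (Suc N) (Suc k) =
      p ^ (N - j) * (gb p N j + p ^ Suc j * gb p N (Suc j)) + (gb p N (Suc j) + p ^ Suc (Suc j) * gb p N (Suc (Suc j)))"
      unfolding Suc by simp
    have M: "p ^ Suc (Suc j) * (p ^ (N - Suc j) * gb p N (Suc j)) = p ^ (N - j) * (p ^ Suc j * gb p N (Suc j))"
    proof (cases "j < N")
      case True
      have "p ^ Suc (Suc j) * p ^ (N - Suc j) = p ^ (N - j) * p ^ Suc j"
        using True by (intro trans[OF pow_eq pow_eq[symmetric]]) (rule refl, arith)
      thus ?thesis by (metis mult.assoc)
    next
      case False
      hence "gb p N (Suc j) = 0" by (auto intro: gb_zero)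
      thus ?thesis by simp
    qed
    show ?thesis unfolding L R Suc using M by (simp add: algebra_simps)
  qed
qed

lemma gb_double:
  "gb p (Suc (Suc N)) (Suc (Suc k)) = p ^ (N - k) * gb p N k + (1 + p ^ Suc N) * gb p N (Suc k)
      + p ^ Suc (Suc k) * gb p N (Suc (Suc k))"
proof -
  have "gb p (Suc (Suc N)) (Suc (Suc k)) = p ^ (N - k) * gb p (Suc N) (Suc k) + gb p (Suc N) (Suc (Suc k))"
    using gb_pascal2[of p "Suc N" "Suc k"] by simp
  also have "\<dots> = p ^ (N - k) * (gb p N k + p ^ Suc k * gb p N (Suc k)) + (gb p N (Suc k) + p ^ Suc (Suc k) * gb p N (Suc (Suc k)))"
    by simp
  also have "\<dots> = p ^ (N - k) * gb p N k + (1 + p ^ Suc N) * gb p N (Suc k) + p ^ Suc (Suc k) * gb p N (Suc (Suc k))"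
  proof (cases "k \<le> N")
    case True
    hence "p ^ (N - k) * p ^ Suc k = p ^ Suc N" by (intro pow_eq) simp
    hence "p ^ (N - k) * (p ^ Suc k * x) = p ^ Suc N * x" for x by (metis mult.assoc)
    thus ?thesis by (simp add: distrib_left distrib_right)
  next
    case False
    hence "gb p N (Suc k) = 0" by (intro gb_zero) auto
    thus ?thesis by simp
  qed
  finally show ?thesis .
qed

lemma gb_double1: "gb p (Suc (Suc N)) 1 = (1 + p ^ Suc N) + p * gb p N 1"
  using gb_pascal2[of p "Suc N" 0] by (simp add: algebra_simps)


definition ee :: "nat \<Rightarrow> nat \<Rightarrow> nat" where "ee n k = nat ((int k - int n)^2)"
definition cc :: "'a::comm_ring_1 \<Rightarrow> nat \<Rightarrow> nat \<Rightarrow> 'a" where "cc q n k = gb (q^2) (2*n) k * q ^ ee n k"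

lemma int_ee: "int (ee n k) = (int k - int n)^2" by (simp add: ee_def)

lemma swap3: "a * b = c * e \<Longrightarrow> a * g * b = c * (g * (e::'a::comm_ring_1))"
  by (metis mult.assoc mult.commute)

lemma cc_zero: "2 * n < k \<Longrightarrow> cc q n k = 0" by (simp add: cc_def gb_zero)

lemma cc_rec0: "cc q (Suc n) 0 = q^(2*n+1) * cc q n 0"
proof -
  have "ee (Suc n) 0 = (2*n+1) + ee n 0"
    by (rule of_nat_eq_iff[where 'a=int, THEN iffD1]) (simp add: int_ee power2_eq_square algebra_simps)
  thus ?thesis by (simp add: cc_def power_add)
qed

lemma cc_rec1: "cc q (Suc n) 1 = (1 + q^(4*n+2)) * cc q n 0 + q^(2*n+1) * cc q n 1"
proof -
  have g: "gb (q^2) (2 * Suc n) 1 = (1 + (q^2) ^ Suc (2*n)) + q^2 * gb (q^2) (2*n) 1"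
    using gb_double1[of "q^2" "2*n"] by simp
  have e1: "ee (Suc n) 1 = ee n 0" by (simp add: ee_def)
  have t2: "q^2 * gb (q^2) (2*n) 1 * q ^ ee (Suc n) 1 = q^(2*n+1) * cc q n 1"
  proof (cases n)
    case 0 thus ?thesis by (simp add: cc_def gb_zero)
  next
    case (Suc m)
    have "2 + ee (Suc n) 1 = (2*n+1) + ee n 1"
      by (rule of_nat_eq_iff[where 'a=int, THEN iffD1]) (simp add: int_ee power2_eq_square algebra_simps Suc)
    hence "q^2 * q ^ ee (Suc n) 1 = q^(2*n+1) * q ^ ee n 1" by (metis power_add)
    thus ?thesis unfolding cc_def by (rule swap3)
  qed
  have "(q^2) ^ Suc (2*n) = q^(4*n+2)" by (simp only: power_mult[symmetric]) (simp add: algebra_simps)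
  thus ?thesis using t2 unfolding cc_def g e1 by (simp add: algebra_simps)
qed

lemma cc_rec2: "cc q (Suc n) (Suc (Suc k)) = q^(2*n+1) * cc q n k + (1 + q^(4*n+2)) * cc q n (Suc k)
   + q^(2*n+1) * cc q n (Suc (Suc k))"
proof -
  have g: "gb (q^2) (2 * Suc n) (Suc (Suc k)) = (q^2) ^ (2*n - k) * gb (q^2) (2*n) k
     + (1 + (q^2) ^ Suc (2*n)) * gb (q^2) (2*n) (Suc k) + (q^2) ^ Suc (Suc k) * gb (q^2) (2*n) (Suc (Suc k))"
    using gb_double[of "q^2" "2*n" k] by simp
  have t1: "(q^2) ^ (2*n - k) * gb (q^2) (2*n) k * q ^ ee (Suc n) (Suc (Suc k)) = q^(2*n+1) * cc q n k"
  proof (cases "k \<le> 2*n")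
    case True
    have i: "int (2 * (2*n - k)) = 4 * int n - 2 * int k" using True by (simp add: of_nat_diff)
    have "2 * (2*n - k) + ee (Suc n) (Suc (Suc k)) = (2*n+1) + ee n k"
      by (rule of_nat_eq_iff[where 'a=int, THEN iffD1]) (simp only: of_nat_add i, simp add: int_ee power2_eq_square algebra_simps)
    hence "(q^2) ^ (2*n - k) * q ^ ee (Suc n) (Suc (Suc k)) = q^(2*n+1) * q ^ ee n k"
      by (metis power_add power_mult)
    thus ?thesis unfolding cc_def by (rule swap3)
  next
    case False thus ?thesis by (simp add: cc_def gb_zero)
  qed
  have t2: "ee (Suc n) (Suc (Suc k)) = ee n (Suc k)" by (simp add: ee_def algebra_simps)
  have t3: "(q^2) ^ Suc (Suc k) * q ^ ee (Suc n) (Suc (Suc k)) = q^(2*n+1) * q ^ ee n (Suc (Suc k))"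
  proof -
    have "2 * Suc (Suc k) + ee (Suc n) (Suc (Suc k)) = (2*n+1) + ee n (Suc (Suc k))"
      by (rule of_nat_eq_iff[where 'a=int, THEN iffD1]) (simp add: int_ee power2_eq_square algebra_simps)
    thus ?thesis by (metis power_add power_mult)
  qed
  have p4: "(q^2) ^ Suc (2*n) = q^(4*n+2)" by (simp only: power_mult[symmetric]) (simp add: algebra_simps)
  have "cc q (Suc n) (Suc (Suc k)) = (q^2) ^ (2*n - k) * gb (q^2) (2*n) k * q ^ ee (Suc n) (Suc (Suc k))
     + (1 + (q^2) ^ Suc (2*n)) * (gb (q^2) (2*n) (Suc k) * q ^ ee (Suc n) (Suc (Suc k)))
     + gb (q^2) (2*n) (Suc (Suc k)) * ((q^2) ^ Suc (Suc k) * q ^ ee (Suc n) (Suc (Suc k)))"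
    unfolding cc_def g by (simp only: distrib_right distrib_left mult_ac)
  also have "\<dots> = q^(2*n+1) * cc q n k + (1 + q^(4*n+2)) * cc q n (Suc k)
     + gb (q^2) (2*n) (Suc (Suc k)) * (q^(2*n+1) * q ^ ee n (Suc (Suc k)))"
    by (simp only: t1 t3, simp only: p4 t2 cc_def)
  also have "\<dots> = q^(2*n+1) * cc q n k + (1 + q^(4*n+2)) * cc q n (Suc k) + q^(2*n+1) * cc q n (Suc (Suc k))"
    by (simp add: cc_def mult_ac)
  finally show ?thesis .
qed

lemma cc_sum_ext: "2 * n \<le> M \<Longrightarrow> (\<Sum>k\<le>M. cc q n k * w ^ k) = (\<Sum>k\<le>2*n. cc q n k * w ^ k)"
proof (induction M rule: dec_induct)
  case (step m)
  thus ?case by (simp add: cc_zero)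
qed simp

lemma jtp_finite:
  "(\<Sum>k\<le>2*n. cc q n k * w ^ k) = (\<Prod>i=1..n. (1 + w * q^(2*i-1)) * (w + q^(2*i-1)))"
proof (induction n)
  case 0
  show ?case by (simp add: cc_def ee_def)
next
  case (Suc n)
  define S where "S = (\<Sum>k\<le>2*n. cc q n k * w ^ k)"
  define a where "a = q^(2*n+1)"
  define b where "b = 1 + q^(4*n+2)"
  have S1: "S = cc q n 0 + (\<Sum>k\<le>2*n. cc q n (Suc k) * w ^ Suc k)"
  proof -
    have "S = (\<Sum>k\<le>Suc (2*n). cc q n k * w ^ k)" unfolding S_def by (rule cc_sum_ext[symmetric]) simp
    also have "\<dots> = cc q n 0 + (\<Sum>k\<le>2*n. cc q n (Suc k) * w ^ Suc k)" by (simp only: sum.atMost_Suc_shift) simp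
    finally show ?thesis .
  qed
  have S2: "S = cc q n 0 + cc q n 1 * w + (\<Sum>k\<le>2*n. cc q n (Suc (Suc k)) * w ^ Suc (Suc k))"
  proof -
    have "S = (\<Sum>k\<le>Suc (Suc (2*n)). cc q n k * w ^ k)" unfolding S_def by (rule cc_sum_ext[symmetric]) simp
    also have "\<dots> = cc q n 0 + cc q n 1 * w + (\<Sum>k\<le>2*n. cc q n (Suc (Suc k)) * w ^ Suc (Suc k))"
      by (simp only: sum.atMost_Suc_shift) simp
    finally show ?thesis .
  qed
  have eq2: "2 * Suc n = Suc (Suc (2*n))" by simp
  have hT: "(\<Sum>k\<le>2 * Suc n. cc q (Suc n) k * w ^ k)
     = cc q (Suc n) 0 * w^0 + (cc q (Suc n) (Suc 0) * w ^ Suc 0 + (\<Sum>k\<le>2*n. cc q (Suc n) (Suc (Suc k)) * w ^ Suc (Suc k)))"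
    by (simp only: eq2 sum.atMost_Suc_shift)
  have hR: "(\<Sum>k\<le>2*n. cc q (Suc n) (Suc (Suc k)) * w ^ Suc (Suc k))
     = a * w^2 * S + b * w * (\<Sum>k\<le>2*n. cc q n (Suc k) * w ^ Suc k)
       + a * (\<Sum>k\<le>2*n. cc q n (Suc (Suc k)) * w ^ Suc (Suc k))"
    unfolding cc_rec2 S_def a_def b_def
    by (simp add: sum.distrib sum_distrib_left algebra_simps power2_eq_square)
  have h0: "cc q (Suc n) 0 = a * cc q n 0" by (simp add: cc_rec0 a_def)
  have h1: "cc q (Suc n) (Suc 0) = b * cc q n 0 + a * cc q n 1" using cc_rec1[of q n] by (simp add: a_def b_def)
  have "(\<Sum>k\<le>2 * Suc n. cc q (Suc n) k * w ^ k) = (a * w^2 + b * w + a) * S"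
  proof -
    have S1': "(\<Sum>k\<le>2*n. cc q n (Suc k) * w ^ Suc k) = S - cc q n 0" using S1 by simp
    have S2': "(\<Sum>k\<le>2*n. cc q n (Suc (Suc k)) * w ^ Suc (Suc k)) = S - cc q n 0 - cc q n 1 * w"
      using S2 by simp
    show ?thesis unfolding hT hR h0 h1 S1' S2' by (simp add: algebra_simps power2_eq_square)
  qed
  also have "a * w^2 + b * w + a = (1 + w * q^(2 * Suc n - 1)) * (w + q^(2 * Suc n - 1))"
    by (simp add: a_def b_def algebra_simps power2_eq_square power_add[symmetric])
  finally show ?case using Suc.IH unfolding S_def by (simp add: mult.commute)
qed


definition qp :: "'a::comm_ring_1 \<Rightarrow> nat \<Rightarrow> 'a" where "qp p n = (\<Prod>i=1..n. 1 - p ^ i)"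

lemma qp_Suc: "qp p (Suc n) = qp p n * (1 - p ^ Suc n)"
  by (simp add: qp_def)
lemma qp_0[simp]: "qp p 0 = 1" by (simp add: qp_def)

lemma gb_prod: "k \<le> N \<Longrightarrow> gb p N k * qp p k * qp p (N - k) = qp p N"
proof (induction N arbitrary: k)
  case 0 thus ?case by simp
next
  case (Suc N)
  show ?case
  proof (cases k)
    case 0 thus ?thesis by simp
  next
    case (Suc j)
    have jN: "j \<le> N" using Suc.prems Suc by simp
    have A: "gb p N j * qp p (Suc j) * qp p (N - j) = qp p N * (1 - p ^ Suc j)"
    proof -
      have "gb p N j * qp p (Suc j) * qp p (N - j) = (gb p N j * qp p j * qp p (N - j)) * (1 - p ^ Suc j)"
        by (simp only: qp_Suc mult_ac)
      thus ?thesis using Suc.IH[OF jN] by simp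
    qed
    have B: "p ^ Suc j * gb p N (Suc j) * qp p (Suc j) * qp p (N - j) = qp p N * (p ^ Suc j - p ^ Suc N)"
    proof (cases "j < N")
      case True
      have e: "N - j = Suc (N - Suc j)" using True by simp
      have pe: "p ^ Suc j * p ^ (N - j) = p ^ Suc N" using True by (intro pow_eq) simp
      have "p ^ Suc j * gb p N (Suc j) * qp p (Suc j) * qp p (N - j)
          = p ^ Suc j * (1 - p ^ (N - j)) * (gb p N (Suc j) * qp p (Suc j) * qp p (N - Suc j))"
        by (simp only: e qp_Suc) (simp add: algebra_simps)
      also have "\<dots> = p ^ Suc j * (1 - p ^ (N - j)) * qp p N"
        using Suc.IH[of "Suc j"] True by simp
      also have "\<dots> = qp p N * (p ^ Suc j - p ^ Suc j * p ^ (N - j))" by (simp add: algebra_simps)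
      finally show ?thesis unfolding pe .
    next
      case False
      hence "j = N" using jN by simp
      thus ?thesis by (simp add: gb_zero)
    qed
    have "gb p (Suc N) k * qp p k * qp p (Suc N - k)
       = gb p N j * qp p (Suc j) * qp p (N - j) + p ^ Suc j * gb p N (Suc j) * qp p (Suc j) * qp p (N - j)"
      unfolding Suc diff_Suc_Suc gb.simps(3) by (simp only: distrib_right distrib_left mult_ac)
    also have "\<dots> = qp p (Suc N)" by (simp only: A B) (simp add: qp_Suc algebra_simps)
    finally show ?thesis .
  qed
qed



lemma dil_eqN_scale: "k > 0 \<Longrightarrow> eqN n a b \<Longrightarrow> eqN (k * n + (k - 1)) (dil k a) (dil k b)"
proof (unfold eqN_def, intro allI impI)
  fix i assume k: "k > 0" and ab: "\<forall>i\<le>n. a $ i = b $ i" and i: "i \<le> k * n + (k - 1)"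
  show "dil k a $ i = dil k b $ i"
  proof (cases "k dvd i")
    case True
    then obtain m where m: "i = k * m" by blast
    have "k * m < k * (n + 1)" using i m k by simp
    hence "m < n + 1" using k mult_less_cancel1[of k m "n+1"] by simp
    hence "m \<le> n" by simp
    thus ?thesis using ab m k by simp
  qed (simp add: dil_nth)
qed

lemma qp_X2: "qp (fps_X ^ 2 :: int fps) n = euler_trunc n 2"
  by (simp add: qp_def euler_trunc_def power_mult[symmetric] mult.commute)

lemma et2_eqN: "m \<le> j \<Longrightarrow> eqN (2 * m + 1) (euler_trunc j 2) (F 2)"
  using dil_eqN_scale[of 2 m "euler_trunc j 1" F1] F1_eqN[of m j] et_dil[of 2 j]
  by (simp add: F_def)

lemma et0_any: "r > 0 \<Longrightarrow> euler_trunc j r $ 0 = 1"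
  by (simp add: euler_trunc_def prod_nth0)

lemma gb_approx:
  assumes "k \<le> N" "m \<le> k" "m \<le> N - k"
  shows "eqN (2*m+1) (gb (fps_X^2 :: int fps) N k) (iv (F 2))"
proof -
  let ?g = "gb (fps_X^2 :: int fps) N k"
  have p: "?g * euler_trunc k 2 * euler_trunc (N - k) 2 = euler_trunc N 2"
    using gb_prod[OF assms(1), of "fps_X^2 :: int fps"] by (simp add: qp_X2)
  have g: "?g = euler_trunc N 2 * iv (euler_trunc k 2) * iv (euler_trunc (N - k) 2)"
  proof -
    have "euler_trunc N 2 * iv (euler_trunc k 2) * iv (euler_trunc (N - k) 2)
        = ?g * (euler_trunc k 2 * iv (euler_trunc k 2)) * (euler_trunc (N - k) 2 * iv (euler_trunc (N - k) 2))"
      unfolding p[symmetric] by (simp add: mult_ac)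
    thus ?thesis by (simp add: iv_right et0_any)
  qed
  have e1: "eqN (2*m+1) (euler_trunc N 2) (F 2)" using assms by (intro et2_eqN) simp
  have e2: "eqN (2*m+1) (iv (euler_trunc k 2)) (iv (F 2))"
    using assms by (intro eqN_inv[OF iv_right iv_right] et2_eqN) (simp_all add: et0_any)
  have e3: "eqN (2*m+1) (iv (euler_trunc (N - k) 2)) (iv (F 2))"
    using assms by (intro eqN_inv[OF iv_right iv_right] et2_eqN) (simp_all add: et0_any)
  have "eqN (2*m+1) ?g (F 2 * iv (F 2) * iv (F 2))"
    unfolding g by (intro eqN_mult e1 e2 e3)
  thus ?thesis by (simp add: iv_right)
qed

lemma eqN_mult_low:
  assumes "eqN M x y" "\<And>i. i < s \<Longrightarrow> c $ i = 0"
  shows "eqN (M + s) (x * c) (y * c)"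
  unfolding eqN_def
proof (intro allI impI)
  fix i assume i: "i \<le> M + s"
  have "(x * c) $ i - (y * c) $ i = ((x - y) * c) $ i" by (simp add: left_diff_distrib)
  also have "\<dots> = (\<Sum>l=0..i. (x $ l - y $ l) * c $ (i - l))"
    by (simp only: fps_mult_nth fps_sub_nth)
  also have "\<dots> = 0"
  proof (rule sum.neutral, intro ballI)
    fix l assume li: "l \<in> {0..i}"
    show "(x $ l - y $ l) * c $ (i - l) = 0"
    proof (cases "l \<le> M")
      case True thus ?thesis using assms(1) by (simp add: eqN_def)
    next
      case False
      hence "i - l < s" using i li by auto
      thus ?thesis using assms(2)[of "i - l"] by simp
    qed
  qed
  finally show "(x * c) $ i = (y * c) $ i" by simp
qed

definition TH :: "(int \<Rightarrow> int fps) \<Rightarrow> int fps" where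
  "TH a = Abs_fps (\<lambda>i. \<Sum>j\<in>{- int i - 1..int i + 1}. a j $ i)"

definition lowc :: "(int \<Rightarrow> int fps) \<Rightarrow> bool" where
  "lowc a \<longleftrightarrow> (\<forall>j i. int i + 1 < \<bar>j\<bar> \<longrightarrow> a j $ i = 0)"

lemma sum_shift_int: "(\<Sum>k\<le>2*n. f (int k - int n)) = (\<Sum>j\<in>{- int n..int n}. f j)"
  by (rule sum.reindex_bij_witness[of _ "\<lambda>j. nat (j + int n)" "\<lambda>k. int k - int n"]) auto

lemma TH_approx:
  assumes "lowc a" "D < n"
  shows "eqN D (\<Sum>k\<le>2*n. a (int k - int n)) (TH a)"
  unfolding eqN_def
proof (intro allI impI)
  fix i assume i: "i \<le> D"
  have "(\<Sum>k\<le>2*n. a (int k - int n)) $ i = (\<Sum>j\<in>{- int n..int n}. a j $ i)"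
    by (simp add: fps_sum_nth sum_shift_int[of "\<lambda>j. a j $ i"])
  also have "\<dots> = (\<Sum>j\<in>{- int i - 1..int i + 1}. a j $ i)"
  proof (rule sum.mono_neutral_right)
    show "{- int i - 1..int i + 1} \<subseteq> {- int n..int n}" using i assms(2) by auto
    show "\<forall>j\<in>{- int n..int n} - {- int i - 1..int i + 1}. a j $ i = 0"
      using assms(1) unfolding lowc_def by auto
  qed simp
  finally show "(\<Sum>k\<le>2*n. a (int k - int n)) $ i = TH a $ i" by (simp add: TH_def)
qed

lemma gb_sum_approx:
  assumes "lowc a" "D < n"
  shows "eqN D (\<Sum>k\<le>2*n. gb (fps_X^2) (2*n) k * a (int k - int n)) (iv (F 2) * TH a)"
proof -
  have "eqN D (\<Sum>k\<le>2*n. gb (fps_X^2) (2*n) k * a (int k - int n)) (\<Sum>k\<le>2*n. iv (F 2) * a (int k - int n))"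
  proof (rule eqN_sum)
    fix k assume k: "k \<in> {..2*n}"
    define m where "m = (if k \<le> n then k else 2*n - k)"
    define s where "s = nat (\<bar>int k - int n\<bar> - 1)"
    have g: "eqN (2*m+1) (gb (fps_X^2) (2*n) k) (iv (F 2))"
      by (rule gb_approx) (use k in \<open>auto simp: m_def\<close>)
    have low: "a (int k - int n) $ i = 0" if "i < s" for i
      using assms(1) that unfolding lowc_def s_def by auto
    have "eqN (2*m+1+s) (gb (fps_X^2) (2*n) k * a (int k - int n)) (iv (F 2) * a (int k - int n))"
      by (rule eqN_mult_low[OF g low])
    moreover have "D \<le> 2*m+1+s" using assms(2) k unfolding m_def s_def by auto
    ultimately show "eqN D (gb (fps_X^2) (2*n) k * a (int k - int n)) (iv (F 2) * a (int k - int n))"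
      by (rule eqN_mono)
  qed
  moreover have "eqN D (\<Sum>k\<le>2*n. iv (F 2) * a (int k - int n)) (iv (F 2) * TH a)"
    unfolding sum_distrib_left[symmetric] by (intro eqN_mult eqN_refl TH_approx assms)
  ultimately show ?thesis by (rule eqN_trans)
qed



lemma prod_split_parity:
  fixes f :: "nat \<Rightarrow> 'a::comm_monoid_mult" and n :: nat
  shows "(\<Prod>i=1..2*n. f i) = (\<Prod>i=1..n. f (2*i-1)) * (\<Prod>i=1..n. f (2*i))"
proof (induction n)
  case (Suc n)
  have e: "2 * Suc n = Suc (Suc (2*n))" by simp
  have "(\<Prod>i=1..2*Suc n. f i) = (\<Prod>i=1..2*n. f i) * f (Suc (2*n)) * f (Suc (Suc (2*n)))"
    unfolding e by (simp add: prod.nat_ivl_Suc' mult_ac)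
  thus ?case using Suc by (simp add: prod.nat_ivl_Suc' mult_ac)
qed simp

definition thA :: "int \<Rightarrow> int fps" where "thA j = fps_const ((-1) ^ nat \<bar>j\<bar>) * fps_X ^ nat (j^2)"
definition theta :: "int fps" where "theta = TH thA"

lemma thA_nth: "thA j $ i = (if i = nat (j^2) then (-1) ^ nat \<bar>j\<bar> else 0)"
  by (simp add: thA_def)

lemma sq_ge_abs: "\<bar>j::int\<bar> \<le> j^2"
proof (cases "j = 0")
  case False
  hence "1 \<le> \<bar>j\<bar>" by simp
  hence "\<bar>j\<bar> * 1 \<le> \<bar>j\<bar> * \<bar>j\<bar>" by (intro mult_left_mono) auto
  thus ?thesis by (simp add: power2_eq_square abs_mult[symmetric])
qed simp

lemma lowc_thA: "lowc thA"
  unfolding lowc_def thA_nth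
proof (intro allI impI)
  fix j :: int and i :: nat assume h: "int i + 1 < \<bar>j\<bar>"
  have "i \<noteq> nat (j^2)" using h sq_ge_abs[of j] by auto
  thus "(if i = nat (j^2) then (-1) ^ nat \<bar>j\<bar> else 0) = (0::int)" by simp
qed

lemma sign_shift: "(-1::int) ^ k = (-1) ^ n * (-1) ^ nat \<bar>int k - int n\<bar>"
proof (cases "n \<le> k")
  case True
  then obtain t where "k = n + t" using le_Suc_ex by blast
  thus ?thesis by (simp add: power_add)
next
  case False
  then obtain t where t: "n = k + t" using le_Suc_ex[of k n] by auto
  hence "nat \<bar>int k - int n\<bar> = t" by simp
  thus ?thesis using t by (simp add: power_add mult.assoc[symmetric] power_mult_distrib[symmetric])
qed

lemma neg1_fps_power: "(-1 :: int fps) ^ k = fps_const ((-1) ^ k)"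
  by (simp add: fps_const_power[symmetric] fps_const_neg[symmetric])

lemma cc_theta: "cc (fps_X :: int fps) n k * (-1) ^ k = fps_const ((-1)^n) * (gb (fps_X^2) (2*n) k * thA (int k - int n))"
proof -
  have "ee n k = nat ((int k - int n)^2)" by (simp add: ee_def)
  thus ?thesis unfolding cc_def thA_def neg1_fps_power sign_shift[of k n]
    by (simp only: fps_const_mult[symmetric] mult_ac)
qed

definition Odd_n :: "nat \<Rightarrow> int fps" where "Odd_n n = (\<Prod>i=1..n. 1 - fps_X ^ (2*i-1))"

lemma jtp_theta: "(\<Sum>k\<le>2*n. gb (fps_X^2) (2*n) k * thA (int k - int n)) = Odd_n n ^ 2"
proof -
  define c :: "int fps" where "c = fps_const ((-1)^n)"
  have cc1: "c * c = 1" unfolding c_def fps_const_mult by (simp add: power_mult_distrib[symmetric])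
  have "c * (\<Sum>k\<le>2*n. gb (fps_X^2) (2*n) k * thA (int k - int n))
      = (\<Sum>k\<le>2*n. cc (fps_X :: int fps) n k * (-1) ^ k)"
    unfolding c_def by (simp only: cc_theta sum_distrib_left)
  also have "\<dots> = (\<Prod>i=1..n. (1 + (-1) * fps_X^(2*i-1)) * (-1 + fps_X^(2*i-1)))"
    by (rule jtp_finite)
  also have "\<dots> = (\<Prod>i=1..n. (-1) * (1 - fps_X^(2*i-1))^2)"
  proof (intro prod.cong refl)
    fix i
    show "(1 + (-1) * fps_X^(2*i-1)) * (-1 + fps_X^(2*i-1)) = (-1) * (1 - fps_X^(2*i-1) :: int fps)^2"
      by (simp add: power2_eq_square ring_distribs)
  qed
  also have "\<dots> = (-1)^n * Odd_n n ^ 2"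
    by (simp only: prod.distrib Odd_n_def prod_power_distrib prod_constant card_atLeastAtMost) simp
  also have "(-1 :: int fps)^n = c" unfolding c_def by (rule neg1_fps_power)
  finally have h: "c * (\<Sum>k\<le>2*n. gb (fps_X^2) (2*n) k * thA (int k - int n)) = c * Odd_n n ^ 2" .
  have "(\<Sum>k\<le>2*n. gb (fps_X^2) (2*n) k * thA (int k - int n)) = c * (c * (\<Sum>k\<le>2*n. gb (fps_X^2) (2*n) k * thA (int k - int n)))"
    by (simp only: mult.assoc[symmetric] cc1 mult_1)
  also have "\<dots> = c * c * Odd_n n ^ 2" by (simp only: h mult.assoc)
  finally show ?thesis by (simp only: cc1 mult_1)
qed

lemma Odd_n_et: "Odd_n n * euler_trunc n 2 = euler_trunc (2*n) 1"
proof -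
  have "euler_trunc (2*n) 1 = (\<Prod>i=1..n. 1 - fps_X ^ (2*i-1)) * (\<Prod>i=1..n. 1 - fps_X ^ (2*i))"
    unfolding euler_trunc_def mult_1 by (rule prod_split_parity)
  thus ?thesis unfolding Odd_n_def euler_trunc_def by simp
qed
lemma Odd_n_approx: "eqN (2*n) (Odd_n n) (F 1 * iv (F 2))"
proof -
  have u: "euler_trunc n 2 * iv (euler_trunc n 2) = 1" by (rule iv_right) (simp add: et0_any)
  have o: "Odd_n n = euler_trunc (2*n) 1 * iv (euler_trunc n 2)"
  proof -
    have "Odd_n n = Odd_n n * (euler_trunc n 2 * iv (euler_trunc n 2))" by (simp only: u mult_1_right)
    also have "\<dots> = euler_trunc (2*n) 1 * iv (euler_trunc n 2)" by (simp only: mult.assoc[symmetric] Odd_n_et)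
    finally show ?thesis .
  qed
  have e1: "eqN (2*n) (euler_trunc (2*n) 1) (F 1)" by (rule F_eqN) auto
  have e0: "eqN (2*n+1) (euler_trunc n 2) (F 2)" by (rule et2_eqN) simp
  have e2': "eqN (2*n+1) (iv (euler_trunc n 2)) (iv (F 2))"
    by (rule eqN_inv[OF u _ e0]) (rule iv_right, simp)
  have e2: "eqN (2*n) (iv (euler_trunc n 2)) (iv (F 2))" by (rule eqN_mono[OF e2']) simp
  show ?thesis unfolding o by (intro eqN_mult e1 e2)
qed

lemma S1: "F 1 ^ 2 = F 2 * theta"
proof -
  have eq: "(F 1 * iv (F 2)) ^ 2 = iv (F 2) * theta"
  proof (rule eqN_eq)
    fix D
    have a: "eqN D (Odd_n (D+1) ^ 2) (iv (F 2) * theta)"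
      using gb_sum_approx[OF lowc_thA, of D "D+1"] unfolding jtp_theta theta_def by simp
    have b: "eqN D (Odd_n (D+1) ^ 2) ((F 1 * iv (F 2)) ^ 2)"
      by (rule eqN_power, rule eqN_mono[OF Odd_n_approx]) simp
    show "eqN D ((F 1 * iv (F 2)) ^ 2) (iv (F 2) * theta)"
      using a b eqN_sym eqN_trans by blast
  qed
  have u: "F 2 * iv (F 2) = 1" by (rule iv_right) simp
  have "F 1 ^ 2 = F 1 ^ 2 * (F 2 * iv (F 2)) * (F 2 * iv (F 2))" by (simp only: u mult_1_right)
  also have "\<dots> = F 2 * F 2 * (F 1 * iv (F 2)) ^ 2" by (simp only: power2_eq_square mult_ac)
  also have "\<dots> = F 2 * F 2 * (iv (F 2) * theta)" by (simp only: eq)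
  also have "\<dots> = F 2 * theta * (F 2 * iv (F 2))" by (simp only: mult_ac)
  also have "\<dots> = F 2 * theta" by (simp only: u mult_1_right)
  finally show ?thesis .
qed



definition psA :: "int \<Rightarrow> int fps" where "psA j = fps_X ^ nat (j^2 + j)"
definition psi2 :: "int fps" where "psi2 = TH psA"

lemma tri_ge: "\<bar>j::int\<bar> - 1 \<le> j^2 + j"
proof (cases "j \<ge> 0")
  case True
  have jj: "0 \<le> j * j" using True by simp
  have a: "\<bar>j\<bar> = j" using True by simp
  show ?thesis unfolding a power2_eq_square using jj by linarith
next
  case False
  have "0 \<le> (j + 1)^2" by simp
  thus ?thesis using False by (simp add: power2_eq_square algebra_simps)
qed

lemma tri_nonneg: "0 \<le> (j::int)^2 + j"
proof (cases "j \<ge> 0")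
  case True thus ?thesis by simp
next
  case False
  hence "0 \<le> j * (j + 1)" by (simp add: mult_nonpos_nonpos)
  thus ?thesis by (simp add: power2_eq_square algebra_simps)
qed

lemma lowc_psA: "lowc psA"
  unfolding lowc_def psA_def
proof (intro allI impI)
  fix j :: int and i :: nat assume h: "int i + 1 < \<bar>j\<bar>"
  have "i \<noteq> nat (j^2 + j)" using h tri_ge[of j] by auto
  thus "(fps_X ^ nat (j^2 + j) :: int fps) $ i = 0" by simp
qed

lemma cc_psi: "cc (fps_X :: int fps) n k * fps_X ^ k = fps_X ^ n * (gb (fps_X^2) (2*n) k * psA (int k - int n))"
proof -
  have "ee n k + k = n + nat ((int k - int n)^2 + (int k - int n))"
    using tri_nonneg[of "int k - int n"]
    by (intro of_nat_eq_iff[where 'a=int, THEN iffD1]) (simp add: int_ee)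
  hence "(fps_X :: int fps) ^ ee n k * fps_X ^ k = fps_X ^ n * fps_X ^ nat ((int k - int n)^2 + (int k - int n))"
    by (simp only: power_add[symmetric])
  thus ?thesis unfolding cc_def psA_def mult.assoc by (simp only:) (rule mult.left_commute)
qed

lemma Xpow_cancel: "(fps_X ^ n :: int fps) * a = fps_X ^ n * b \<Longrightarrow> a = b"
proof (rule fps_ext)
  fix i assume h: "fps_X ^ n * a = fps_X ^ n * b"
  have "(fps_X ^ n * a) $ (i + n) = (fps_X ^ n * b) $ (i + n)" using h by simp
  thus "a $ i = b $ i" by (simp add: fps_X_power_mult_nth)
qed

definition En :: "nat \<Rightarrow> int fps" where "En m = (\<Prod>i=1..m. 1 + fps_X ^ (2*i))"

lemma jtp_psi: "(\<Sum>k\<le>2*n. gb (fps_X^2) (2*n) k * psA (int k - int n))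
   = En n * (\<Prod>i=1..n. 1 + fps_X ^ (2*(i-1)))"
proof (rule Xpow_cancel[of n])
  have "fps_X ^ n * (\<Sum>k\<le>2*n. gb (fps_X^2) (2*n) k * psA (int k - int n))
      = (\<Sum>k\<le>2*n. cc (fps_X :: int fps) n k * fps_X ^ k)"
    by (simp only: cc_psi sum_distrib_left)
  also have "\<dots> = (\<Prod>i=1..n. (1 + fps_X * fps_X^(2*i-1)) * (fps_X + fps_X^(2*i-1)))"
    by (rule jtp_finite)
  also have "\<dots> = (\<Prod>i=1..n. fps_X * ((1 + fps_X ^ (2*i)) * (1 + fps_X ^ (2*(i-1)))))"
  proof (intro prod.cong refl)
    fix i assume "i \<in> {1..n}"
    then obtain t where t: "i = Suc t" by (cases i) auto
    show "(1 + fps_X * fps_X^(2*i-1)) * (fps_X + fps_X^(2*i-1)) = fps_X * ((1 + fps_X ^ (2*i)) * (1 + fps_X ^ (2*(i-1))) :: int fps)"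
    proof -
      have a: "(fps_X :: int fps) ^ (2*i-1) = fps_X * fps_X ^ (2*t)" unfolding t by simp
      have b: "(fps_X :: int fps) ^ (2*i) = fps_X * (fps_X * fps_X ^ (2*t))" unfolding t by simp
      have c: "2*(i-1) = 2*t" unfolding t by simp
      show ?thesis unfolding a b c by (simp only: ring_distribs mult_ac mult_1_left mult_1_right)
    qed
  qed
  also have "\<dots> = fps_X ^ n * (En n * (\<Prod>i=1..n. 1 + fps_X ^ (2*(i-1))))"
    by (simp only: prod.distrib En_def prod_constant card_atLeastAtMost) simp
  finally show "fps_X ^ n * (\<Sum>k\<le>2*n. gb (fps_X^2) (2*n) k * psA (int k - int n))
      = fps_X ^ n * (En n * (\<Prod>i=1..n. 1 + fps_X ^ (2*(i-1))))" .
qed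

lemma prod_shift_En: "(\<Prod>i=1..Suc m. 1 + fps_X ^ (2*(i-1)) :: int fps) = 2 * En m"
proof (induction m)
  case 0 show ?case by (simp add: En_def)
next
  case (Suc m)
  have "(\<Prod>i=1..Suc (Suc m). 1 + fps_X ^ (2*(i-1)) :: int fps) = (\<Prod>i=1..Suc m. 1 + fps_X ^ (2*(i-1))) * (1 + fps_X ^ (2 * Suc m))"
    by (simp add: prod.nat_ivl_Suc')
  also have "\<dots> = 2 * En (Suc m)" unfolding Suc by (simp add: En_def prod.nat_ivl_Suc' mult_ac)
  finally show ?case .
qed

lemma En_et: "En m * euler_trunc m 2 = euler_trunc m 4"
proof -
  have "En m * euler_trunc m 2 = (\<Prod>i=1..m. (1 + fps_X ^ (2*i)) * (1 - fps_X ^ (2*i)))"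
    by (simp only: En_def euler_trunc_def prod.distrib)
  also have "\<dots> = euler_trunc m 4"
    unfolding euler_trunc_def
  proof (intro prod.cong refl)
    fix i :: nat
    have "(fps_X :: int fps) ^ (4*i) = fps_X ^ (2*i) * fps_X ^ (2*i)" by (simp only: power_add[symmetric]) simp
    thus "(1 + fps_X ^ (2*i)) * (1 - fps_X ^ (2*i)) = (1 - fps_X ^ (4*i) :: int fps)"
      by (simp only: ring_distribs mult_1_left mult_1_right) simp
  qed
  finally show ?thesis .
qed

lemma et4_eqN: "eqN (2 * m + 1) (euler_trunc m 4) (F 4)"
proof -
  have "eqN (4 * m + (4 - 1)) (dil 4 (euler_trunc m 1)) (dil 4 F1)"
    by (rule dil_eqN_scale) (simp, rule F1_eqN, simp)
  hence "eqN (4 * m + 3) (euler_trunc m 4) (F 4)" using et_dil[of 4 m] by (simp add: F_def)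
  thus ?thesis by (rule eqN_mono) simp
qed

lemma En_approx: "eqN (2*m+1) (En m) (F 4 * iv (F 2))"
proof -
  have u: "euler_trunc m 2 * iv (euler_trunc m 2) = 1" by (rule iv_right) (simp add: et0_any)
  have o: "En m = euler_trunc m 4 * iv (euler_trunc m 2)"
  proof -
    have "En m = En m * (euler_trunc m 2 * iv (euler_trunc m 2))" by (simp only: u mult_1_right)
    also have "\<dots> = euler_trunc m 4 * iv (euler_trunc m 2)" by (simp only: mult.assoc[symmetric] En_et)
    finally show ?thesis .
  qed
  have e0: "eqN (2*m+1) (euler_trunc m 2) (F 2)" by (rule et2_eqN) simp
  have e2: "eqN (2*m+1) (iv (euler_trunc m 2)) (iv (F 2))"
    by (rule eqN_inv[OF u _ e0]) (rule iv_right, simp)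
  show ?thesis unfolding o by (intro eqN_mult et4_eqN e2)
qed

lemma S2: "psi2 = 2 * F 4 ^ 2 * iv (F 2)"
proof -
  have eq: "iv (F 2) * psi2 = 2 * (F 4 * iv (F 2)) ^ 2"
  proof (rule eqN_eq)
    fix D
    have a: "eqN D (\<Sum>k\<le>2*Suc (Suc D). gb (fps_X^2) (2*Suc (Suc D)) k * psA (int k - int (Suc (Suc D)))) (iv (F 2) * psi2)"
      unfolding psi2_def by (rule gb_sum_approx[OF lowc_psA]) simp
    have "(\<Sum>k\<le>2*Suc (Suc D). gb (fps_X^2) (2*Suc (Suc D)) k * psA (int k - int (Suc (Suc D))))
        = En (Suc (Suc D)) * (2 * En (Suc D))"
      unfolding jtp_psi prod_shift_En ..
    moreover have "eqN D (En (Suc (Suc D)) * (2 * En (Suc D))) ((F 4 * iv (F 2)) * (2 * (F 4 * iv (F 2))))"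
      by (intro eqN_mult eqN_refl eqN_mono[OF En_approx]) simp_all
    ultimately have b: "eqN D (\<Sum>k\<le>2*Suc (Suc D). gb (fps_X^2) (2*Suc (Suc D)) k * psA (int k - int (Suc (Suc D))))
        (2 * (F 4 * iv (F 2)) ^ 2)" by (simp add: power2_eq_square mult_ac)
    show "eqN D (iv (F 2) * psi2) (2 * (F 4 * iv (F 2)) ^ 2)"
      using a b eqN_sym eqN_trans by blast
  qed
  have u: "F 2 * iv (F 2) = 1" by (rule iv_right) simp
  have "psi2 = F 2 * (iv (F 2) * psi2)" by (simp only: mult.assoc[symmetric] u mult_1_left)
  also have "\<dots> = 2 * F 4 ^ 2 * iv (F 2) * (F 2 * iv (F 2))" by (simp only: eq) (simp only: power2_eq_square mult_ac)
  also have "\<dots> = 2 * F 4 ^ 2 * iv (F 2)" by (simp only: u mult_1_right)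
  finally show ?thesis .
qed



lemma sq_le: "j^2 = int i \<Longrightarrow> j \<in> {- int i - 1..int i + 1}"
  using sq_ge_abs[of j] by auto

lemma theta_nth: "theta $ i = (\<Sum>j\<in>{j. j^2 = int i}. (-1) ^ nat \<bar>j\<bar>)"
proof -
  have "theta $ i = (\<Sum>j\<in>{- int i - 1..int i + 1}. if i = nat (j^2) then (-1) ^ nat \<bar>j\<bar> else 0)"
    by (simp add: theta_def TH_def thA_nth)
  also have "\<dots> = (\<Sum>j\<in>{j \<in> {- int i - 1..int i + 1}. i = nat (j^2)}. (-1) ^ nat \<bar>j\<bar>)"
    by (rule sum.inter_filter[symmetric]) simp
  also have "{j \<in> {- int i - 1..int i + 1}. i = nat (j^2)} = {j. j^2 = int i}"
    using sq_le by auto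
  finally show ?thesis .
qed

lemma tri_le: "j^2 + j = int i \<Longrightarrow> j \<in> {- int i - 1..int i + 1}"
  using tri_ge[of j] by auto

lemma psi2_nth: "psi2 $ i = (\<Sum>j\<in>{j. j^2 + j = int i}. 1)"
proof -
  have "psi2 $ i = (\<Sum>j\<in>{- int i - 1..int i + 1}. if i = nat (j^2 + j) then 1 else 0)"
    by (simp add: psi2_def TH_def psA_def)
  also have "\<dots> = (\<Sum>j\<in>{j \<in> {- int i - 1..int i + 1}. i = nat (j^2 + j)}. 1)"
    by (rule sum.inter_filter[symmetric]) simp
  also have "{j \<in> {- int i - 1..int i + 1}. i = nat (j^2 + j)} = {j. j^2 + j = int i}"
    using tri_le tri_nonneg by force
  finally show ?thesis .
qed

lemma even_sq_iff: "even ((j::int)^2) \<longleftrightarrow> even j" by simp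

lemma sq_mod4: "(j::int)^2 mod 4 = 0 \<or> (j::int)^2 mod 4 = 1"
proof (cases "even j")
  case True
  then obtain u where "j = 2 * u" by blast
  thus ?thesis by (simp add: power2_eq_square)
next
  case False
  then obtain u where "j = 2 * u + 1" using oddE by blast
  hence h: "j^2 = 4 * (u^2 + u) + 1" by (simp add: power2_eq_square algebra_simps)
  have "(4 * (u^2 + u) + 1) mod 4 = (1::int)" by presburger
  thus ?thesis unfolding h by simp
qed

lemma set_4t: "{j::int. j^2 = int (4*t)} = (\<lambda>u. 2*u) ` {u. u^2 = int t}"
proof (rule set_eqI, rule iffI)
  fix j :: int assume "j \<in> {j. j^2 = int (4*t)}"
  hence h: "j^2 = 4 * int t" by simp
  hence "even (j^2)" by simp
  hence "even j" by simp
  then obtain u where u: "j = 2 * u" by blast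
  hence "u^2 = int t" using h by (simp add: power2_eq_square)
  thus "j \<in> (\<lambda>u. 2*u) ` {u. u^2 = int t}" using u by blast
qed (auto simp: power2_eq_square)

lemma set_4t1: "{j::int. j^2 = int (4*t+1)} = (\<lambda>u. 2*u+1) ` {u. u^2 + u = int t}"
proof (rule set_eqI, rule iffI)
  fix j :: int assume "j \<in> {j. j^2 = int (4*t+1)}"
  hence h: "j^2 = 4 * int t + 1" by simp
  hence "odd (j^2)" by simp
  hence "odd j" by simp
  then obtain u where u: "j = 2 * u + 1" using oddE by blast
  hence "u^2 + u = int t" using h by (simp add: power2_eq_square algebra_simps)
  thus "j \<in> (\<lambda>u. 2*u+1) ` {u. u^2 + u = int t}" using u by blast
qed (auto simp: power2_eq_square algebra_simps)

lemma set_4t23: "r = 2 \<or> r = 3 \<Longrightarrow> {j::int. j^2 = int (4*t+r)} = {}"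
proof -
  assume r: "r = 2 \<or> r = 3"
  { fix j :: int assume "j^2 = int (4*t+r)"
    hence "j^2 mod 4 = int r" using r by auto
    hence False using sq_mod4[of j] r by auto }
  thus ?thesis by auto
qed

lemma theta_4t: "theta $ (4*t) = neg theta $ t"
proof -
  have "theta $ (4*t) = (\<Sum>u\<in>{u. u^2 = int t}. (-1) ^ nat \<bar>2*u\<bar>)"
    unfolding theta_nth set_4t by (subst sum.reindex) (auto simp: inj_on_def)
  also have "\<dots> = (\<Sum>u\<in>{u. u^2 = int t}. 1)"
  proof (rule sum.cong[OF refl])
    fix u :: int
    have "nat \<bar>2*u\<bar> = 2 * nat \<bar>u\<bar>" by simp
    thus "(-1::int) ^ nat \<bar>2*u\<bar> = 1" by (simp add: power_mult)
  qed
  also have "\<dots> = (\<Sum>u\<in>{u. u^2 = int t}. (-1)^t * (-1) ^ nat \<bar>u\<bar>)"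
  proof (rule sum.cong[OF refl])
    fix u :: int assume "u \<in> {u. u^2 = int t}"
    hence ut: "u^2 = int t" by simp
    have "even (t + nat \<bar>u\<bar>)"
    proof -
      have "int (t + nat \<bar>u\<bar>) = u^2 + \<bar>u\<bar>" using ut by simp
      moreover have "even (u^2 + \<bar>u\<bar>)" by (cases "even u") auto
      ultimately show ?thesis by (metis even_of_nat)
    qed
    thus "1 = (-1::int)^t * (-1) ^ nat \<bar>u\<bar>" by (simp add: power_add[symmetric])
  qed
  also have "\<dots> = neg theta $ t" by (simp add: neg_nth theta_nth sum_distrib_left)
  finally show ?thesis .
qed

lemma theta_4t1: "theta $ (4*t+1) = - psi2 $ t"
proof -
  have "theta $ (4*t+1) = (\<Sum>u\<in>{u. u^2 + u = int t}. (-1) ^ nat \<bar>2*u+1\<bar>)"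
    unfolding theta_nth set_4t1 by (subst sum.reindex) (auto simp: inj_on_def)
  also have "\<dots> = (\<Sum>u\<in>{u. u^2 + u = int t}. -1)"
  proof (rule sum.cong[OF refl])
    fix u :: int
    have "odd (nat \<bar>2*u+1\<bar>)"
    proof -
      have "int (nat \<bar>2*u+1\<bar>) = \<bar>2*u+1\<bar>" by simp
      moreover have "odd \<bar>2*u+1\<bar>" by simp
      ultimately show ?thesis by (metis even_of_nat)
    qed
    thus "(-1::int) ^ nat \<bar>2*u+1\<bar> = -1" by simp
  qed
  also have "\<dots> = - psi2 $ t" by (simp add: psi2_nth sum_negf)
  finally show ?thesis .
qed

lemma theta_4t23: "r = 2 \<or> r = 3 \<Longrightarrow> theta $ (4*t+r) = 0"
  unfolding theta_nth using set_4t23 by simp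

lemma theta_dissect: "theta = dil 4 (neg theta) - fps_X * dil 4 psi2"
proof (rule fps_ext)
  fix i :: nat
  define t where "t = i div 4"
  define r where "r = i mod 4"
  have tr: "i = 4*t + r" "r < 4" unfolding t_def r_def by presburger+
  show "theta $ i = (dil 4 (neg theta) - fps_X * dil 4 psi2) $ i"
  proof (cases "r = 0")
    case True
    hence i: "i = 4*t" using tr by simp
    have a: "dil 4 (neg theta) $ i = neg theta $ t" unfolding i by simp
    have b: "(fps_X * dil 4 psi2) $ i = 0"
    proof (cases t)
      case (Suc s)
      have "\<not> 4 dvd (4*t - 1)" using Suc by presburger
      thus ?thesis unfolding i using Suc by (simp add: fps_X_mult_nth dil_nth)
    qed (simp add: i)
    show ?thesis using a b theta_4t[of t] i by simp
  next
    case False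
    note r = False
    show ?thesis
    proof (cases "r = 1")
      case True
      have "\<not> 4 dvd (4*t+1)" by presburger
      moreover have "(4*t+1) - 1 = 4*t" by simp
      ultimately show ?thesis using tr True theta_4t1[of t] by (auto simp: dil_nth fps_X_mult_nth)
    next
      case False
      hence r23: "r = 2 \<or> r = 3" using r tr by auto
      have "\<not> 4 dvd (4*t+r)" "\<not> 4 dvd (4*t+r-1)" using r23 by presburger+
      thus ?thesis using tr theta_4t23[OF r23, of t] r by (auto simp: dil_nth fps_X_mult_nth)
    qed
  qed
qed



definition sm :: "nat \<Rightarrow> int fps \<Rightarrow> bool" where "sm k a \<longleftrightarrow> (\<exists>b. a = dil k b)"

lemma sm_nth: "sm k a \<Longrightarrow> \<not> k dvd i \<Longrightarrow> a $ i = 0"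
  by (auto simp: sm_def dil_nth)
lemma sm_dil: "sm k (dil k b)" by (auto simp: sm_def)
lemma sm_mult: "k > 0 \<Longrightarrow> sm k a \<Longrightarrow> sm k b \<Longrightarrow> sm k (a * b)"
  by (auto simp: sm_def dil_mult[symmetric])
lemma sm_add: "sm k a \<Longrightarrow> sm k b \<Longrightarrow> sm k (a + b)"
  by (auto simp: sm_def dil_add[symmetric])
lemma sm_diff: "sm k a \<Longrightarrow> sm k b \<Longrightarrow> sm k (a - b)"
  by (auto simp: sm_def dil_diff[symmetric])
lemma sm_power: "k > 0 \<Longrightarrow> sm k a \<Longrightarrow> sm k (a ^ m)"
  by (auto simp: sm_def dil_power[symmetric])
lemma sm_iv: "k > 0 \<Longrightarrow> a $ 0 = 1 \<Longrightarrow> sm k a \<Longrightarrow> sm k (iv a)"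
  by (auto simp: sm_def dil_iv[symmetric])
lemma sm_F: "k > 0 \<Longrightarrow> r > 0 \<Longrightarrow> sm k (F (k * r))"
  using F_dil[of k r] sm_dil[of k "F r"] by simp
lemma sm_1: "k > 0 \<Longrightarrow> sm k 1"
  using sm_dil[of k 1] by simp
lemma sm_num: "k > 0 \<Longrightarrow> sm k (numeral c)"
proof -
  assume k: "k > 0"
  have "dil k (numeral c) = numeral c" using k by (intro fps_ext) (auto simp: dil_nth fps_numeral_nth)
  thus ?thesis using sm_dil[of k "numeral c"] by simp
qed
lemma sm_weaken: "k > 0 \<Longrightarrow> l > 0 \<Longrightarrow> sm (k * l) a \<Longrightarrow> sm k a"
  by (auto simp: sm_def dil_dil[symmetric])

lemma iv_power: "a $ 0 = 1 \<Longrightarrow> iv (a ^ k) = iv a ^ k"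
  by (rule iv_unique) (simp_all add: power_mult_distrib[symmetric] iv_right fps_nth_power_0)
lemma iv_mult: "a $ 0 = 1 \<Longrightarrow> b $ 0 = 1 \<Longrightarrow> iv (a * b) = iv a * iv b"
proof (rule iv_unique)
  assume a: "a $ 0 = 1" and b: "b $ 0 = 1"
  show "(a * b) $ 0 = 1" using a b by simp
  have "a * b * (iv a * iv b) = (a * iv a) * (b * iv b)" by (simp only: mult_ac)
  thus "a * b * (iv a * iv b) = 1" using a b by (simp add: iv_right)
qed
lemma iv0: "a $ 0 = 1 \<Longrightarrow> iv a $ 0 = 1"
  by (simp add: iv_def)

lemma Fu: "F r * iv (F r) = 1" by (rule iv_right) simp
lemma Fu_pow: "F r ^ k * iv (F r) ^ k = 1"
  by (simp only: power_mult_distrib[symmetric] Fu power_one)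

lemma F_sq2: "r > 0 \<Longrightarrow> cg 4 (F r ^ 4) (F (2*r) ^ 2)"
  using cg_sq[OF F_sq[of r]] by (simp add: power_mult[symmetric])
lemma F_sq3: "r > 0 \<Longrightarrow> cg 8 (F r ^ 8) (F (2*r) ^ 4)"
  using cg_sq[OF F_sq2[of r]] by (simp add: power_mult[symmetric])
lemma F_sq4: "r > 0 \<Longrightarrow> cg 16 (F r ^ 16) (F (2*r) ^ 8)"
  using cg_sq[OF F_sq3[of r]] by (simp add: power_mult[symmetric])

lemma cg_ivp: "cg m (F r ^ k) (F s ^ l) \<Longrightarrow> cg m (iv (F r) ^ k) (iv (F s) ^ l)"
  using cg_iv[of "F r ^ k" "F s ^ l" m] by (simp add: iv_power fps_nth_power_0)

lemma theta0: "theta $ 0 = 1"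
proof -
  have "(F 1 ^ 2) $ 0 = (F 2 * theta) $ 0" using S1 by simp
  thus ?thesis by (simp add: fps_nth_power_0)
qed

lemma main_red: "cg 8 (F 2 ^ 7 * iv (F 1) ^ 22) (theta * iv (F 2) ^ 4)"
proof -
  have e1: "cg 8 (iv (F 1) ^ 16) (iv (F 2) ^ 8)"
    using cg_dvd[of 8 2] cg_ivp[OF F_sq4[of 1]] by simp
  have e2: "cg 8 (iv (F 1) ^ 8) (iv (F 2) ^ 4)"
    using cg_ivp[OF F_sq3[of 1]] by simp
  have h1: "F 2 ^ 7 * iv (F 1) ^ 22 = F 2 ^ 7 * iv (F 1) ^ 16 * iv (F 1) ^ 8 * F 1 ^ 2"
  proof -
    have "F 2 ^ 7 * iv (F 1) ^ 22 = F 2 ^ 7 * iv (F 1) ^ 22 * (F 1 ^ 2 * iv (F 1) ^ 2)"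
      by (simp only: Fu_pow mult_1_right)
    also have "\<dots> = F 2 ^ 7 * iv (F 1) ^ 16 * iv (F 1) ^ 8 * F 1 ^ 2"
      by (simp only: power_add[symmetric] mult_ac) simp
    finally show ?thesis .
  qed
  have cgf: "cg 8 (F 2 ^ 7 * iv (F 1) ^ 16 * iv (F 1) ^ 8 * F 1 ^ 2) (F 2 ^ 7 * iv (F 2) ^ 8 * iv (F 2) ^ 4 * F 1 ^ 2)"
    by (intro cg_mult cg_refl e1 e2)
  have eqY: "F 2 ^ 7 * iv (F 2) ^ 8 * iv (F 2) ^ 4 * F 1 ^ 2 = theta * iv (F 2) ^ 4"
  proof -
    have "F 2 ^ 7 * iv (F 2) ^ 8 * iv (F 2) ^ 4 * F 1 ^ 2 = (F 2 ^ 8 * iv (F 2) ^ 8) * (theta * iv (F 2) ^ 4)"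
    proof -
      have p8: "F 2 ^ 8 = F 2 ^ 7 * F 2" by (simp add: power_Suc2[symmetric])
      show ?thesis by (simp only: S1 p8 mult_ac)
    qed
    thus ?thesis by (simp only: Fu_pow mult_1_left)
  qed
  show ?thesis unfolding h1 using cgf unfolding eqY .
qed

definition "phi = neg theta"
definition "AA = dil 4 phi"
definition "QQ = F 16 ^ 2 * iv (F 8)"
definition "VV = iv (F 2) ^ 4"

lemma dil_num: "k > 0 \<Longrightarrow> dil k (numeral c) = numeral c"
  by (intro fps_ext) (auto simp: dil_nth fps_numeral_nth)

lemma dil4_psi2: "dil 4 psi2 = 2 * QQ"
proof -
  have "dil 4 psi2 = dil 4 2 * dil 4 (F 4) ^ 2 * dil 4 (iv (F 2))"
    unfolding S2 by (simp only: dil_mult dil_power zero_less_numeral)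
  also have "\<dots> = 2 * F 16 ^ 2 * iv (F 8)"
    by (simp add: dil_num F_dil dil_iv)
  finally show ?thesis by (simp add: QQ_def mult.assoc)
qed

lemma theta_AQ: "theta = AA - 2 * fps_X * QQ"
  using theta_dissect unfolding dil4_psi2 AA_def phi_def by (simp add: mult_ac)

lemma two_nth: "(2 * b) $ i = 2 * (b $ i :: int)"
  by (simp add: fps_numeral_fps_const)

lemma T_nth: "(theta * VV) $ i = (AA * VV) $ i - 2 * (fps_X * (QQ * VV)) $ i"
proof -
  have "theta * VV = AA * VV - 2 * (fps_X * (QQ * VV))"
    unfolding theta_AQ by (simp add: algebra_simps)
  thus ?thesis by (simp add: two_nth)
qed

lemma sm_AA4: "sm 4 AA" unfolding AA_def by (rule sm_dil)
lemma sm_AA2: "sm 2 AA" using sm_weaken[of 2 2 AA] sm_AA4 by simp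
lemma sm_ivF: "k > 0 \<Longrightarrow> r > 0 \<Longrightarrow> sm k (iv (F (k * r)))"
  by (rule sm_iv) (simp_all add: sm_F)
lemma sm_QQ8: "sm 8 QQ"
  unfolding QQ_def using sm_F[of 8 2] sm_ivF[of 8 1]
  by (intro sm_mult sm_power) simp_all
lemma sm_QQ4: "sm 4 QQ" using sm_weaken[of 4 2 QQ] sm_QQ8 by simp
lemma sm_QQ2: "sm 2 QQ" using sm_weaken[of 2 4 QQ] sm_QQ8 by simp
lemma sm_VV: "sm 2 VV"
  unfolding VV_def using sm_ivF[of 2 1] by (intro sm_power) simp_all

lemma VV4: "cg 4 VV (iv (F 4) ^ 2)"
  unfolding VV_def using cg_ivp[OF F_sq2[of 2]] by simp
lemma VV2: "cg 2 VV (iv (F 8))"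
proof -
  have a: "cg 2 (F 2 ^ 4) (F 4 ^ 2)" using cg_dvd[of 2 2] F_sq2[of 2] by simp
  have b: "cg 2 (F 4 ^ 2) (F 8)" using F_sq[of 4] by simp
  have "cg 2 (F 2 ^ 4) (F 8 ^ 1)" using cg_trans[OF a b] by simp
  thus ?thesis unfolding VV_def using cg_ivp by fastforce
qed

lemma claim_a: "4 dvd (theta * VV) $ (4*n+2)"
proof -
  have "cg 4 (AA * VV) (AA * iv (F 4) ^ 2)" by (rule cg_multL[OF VV4])
  moreover have "(AA * iv (F 4) ^ 2) $ (4*n+2) = 0"
    using sm_AA4 sm_ivF[of 4 1] by (intro sm_nth[of 4]) (auto intro!: sm_mult sm_power, presburger)
  ultimately have "4 dvd (AA * VV) $ (4*n+2)" by (rule cg_nth0)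
  moreover have "(QQ * VV) $ (4*n+1) = 0"
    using sm_QQ2 sm_VV by (intro sm_nth[of 2]) (auto intro!: sm_mult)
  ultimately show ?thesis unfolding T_nth by (simp add: fps_X_mult_nth)
qed

lemma X_Suc: "(fps_X * b) $ Suc i = (b $ i :: int)" by (simp add: fps_X_mult_nth)

lemma AV_odd: "(AA * VV) $ (2*m+1) = 0"
  using sm_AA2 sm_VV by (intro sm_nth[of 2]) (auto intro!: sm_mult)

lemma claim_b: "4 dvd (theta * VV) $ (8*n+5)"
proof -
  have "cg 2 (QQ * VV) (QQ * iv (F 8))" by (rule cg_multL[OF VV2])
  moreover have "(QQ * iv (F 8)) $ (8*n+4) = 0"
    using sm_QQ8 sm_ivF[of 8 1] by (intro sm_nth[of 8]) (auto intro!: sm_mult, presburger)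
  ultimately have "2 dvd (QQ * VV) $ (8*n+4)" by (rule cg_nth0)
  moreover have "(AA * VV) $ (8*n+5) = 0"
  proof -
    have e: "8*n+5 = 2*(4*n+2)+1" by simp
    show ?thesis unfolding e by (rule AV_odd)
  qed
  moreover have "(fps_X * (QQ * VV)) $ (8*n+5) = (QQ * VV) $ (8*n+4)"
  proof -
    have e: "8*n+5 = Suc (8*n+4)" by simp
    show ?thesis unfolding e by (rule X_Suc)
  qed
  ultimately show ?thesis unfolding T_nth by auto
qed

lemma claim_c: "4 dvd (theta * VV) $ (16*n+9)"
proof -
  have "cg 2 (QQ * VV) (QQ * iv (F 8))" by (rule cg_multL[OF VV2])
  moreover have "QQ * iv (F 8) = F 16 ^ 2 * iv (F 8) ^ 2" by (simp add: QQ_def power2_eq_square mult_ac)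
  moreover have "cg 2 (F 16 ^ 2 * iv (F 8) ^ 2) (F 32 * iv (F 16))"
  proof (rule cg_mult)
    show "cg 2 (F 16 ^ 2) (F 32)" using F_sq[of 16] by simp
    show "cg 2 (iv (F 8) ^ 2) (iv (F 16))" using cg_ivp[of 2 8 2 16 1] F_sq[of 8] by simp
  qed
  ultimately have c: "cg 2 (QQ * VV) (F 32 * iv (F 16))" using cg_trans by metis
  have "(F 32 * iv (F 16)) $ (16*n+8) = 0"
    using sm_F[of 16 2] sm_ivF[of 16 1] by (intro sm_nth[of 16]) (auto intro!: sm_mult, presburger)
  with c have "2 dvd (QQ * VV) $ (16*n+8)" by (rule cg_nth0)
  moreover have "(AA * VV) $ (16*n+9) = 0"
  proof -
    have e: "16*n+9 = 2*(8*n+4)+1" by simp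
    show ?thesis unfolding e by (rule AV_odd)
  qed
  moreover have "(fps_X * (QQ * VV)) $ (16*n+9) = (QQ * VV) $ (16*n+8)"
  proof -
    have e: "16*n+9 = Suc (16*n+8)" by simp
    show ?thesis unfolding e by (rule X_Suc)
  qed
  ultimately show ?thesis unfolding T_nth by auto
qed

lemma claim_d: "8 dvd (theta * VV) $ (4*n+3)"
proof -
  have "cg 4 (QQ * VV) (QQ * iv (F 4) ^ 2)" by (rule cg_multL[OF VV4])
  moreover have "(QQ * iv (F 4) ^ 2) $ (4*n+2) = 0"
    using sm_QQ4 sm_ivF[of 4 1] by (intro sm_nth[of 4]) (auto intro!: sm_mult sm_power, presburger)
  ultimately have "4 dvd (QQ * VV) $ (4*n+2)" by (rule cg_nth0)
  moreover have "(AA * VV) $ (4*n+3) = 0"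
  proof -
    have e: "4*n+3 = 2*(2*n+1)+1" by simp
    show ?thesis unfolding e by (rule AV_odd)
  qed
  moreover have "(fps_X * (QQ * VV)) $ (4*n+3) = (QQ * VV) $ (4*n+2)"
  proof -
    have e: "4*n+3 = Suc (4*n+2)" by simp
    show ?thesis unfolding e by (rule X_Suc)
  qed
  ultimately show ?thesis unfolding T_nth by auto
qed

lemma theta_1: "cg 2 theta 1"
proof -
  have a: "cg 2 (F 2 * theta) (F 2)" using F_sq[of 1] S1 by simp
  have "cg 2 (iv (F 2) * (F 2 * theta)) (iv (F 2) * F 2)" by (rule cg_multL[OF a])
  moreover have "iv (F 2) * (F 2 * theta) = theta" by (simp add: mult.assoc[symmetric] iv_left)
  moreover have "iv (F 2) * F 2 = 1" by (simp add: iv_left)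
  ultimately show ?thesis by simp
qed

lemma phi_1: "cg 2 phi 1"
  using cg_neg[OF theta_1] by (simp add: phi_def)

lemma theta4: "cg 8 (theta ^ 4) 1"
proof -
  have "cg 4 (theta ^ 2) (1 ^ 2)" using cg_sq[OF theta_1] by simp
  hence "cg 8 ((theta ^ 2) ^ 2) ((1 ^ 2) ^ 2)" using cg_sq by fastforce
  thus ?thesis by (simp add: power_mult[symmetric])
qed

lemma iv_theta: "cg 8 (iv theta) (theta ^ 3)"
proof -
  have "cg 8 (iv theta * theta ^ 4) (iv theta * 1)" by (rule cg_multL[OF theta4])
  moreover have "iv theta * theta ^ 4 = theta ^ 3"
  proof -
    have "iv theta * theta ^ 4 = (iv theta * theta) * theta ^ 3"
      by (simp add: power_Suc[symmetric] mult_ac del: power_Suc)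
    thus ?thesis by (simp add: iv_left theta0)
  qed
  ultimately show ?thesis using cg_sym by fastforce
qed

lemma sm2_neg: "neg c = c \<Longrightarrow> sm 2 c"
  unfolding sm_def
proof (rule exI[of _ "Abs_fps (\<lambda>i. c $ (2*i))"], rule fps_ext)
  fix i assume h: "neg c = c"
  show "c $ i = dil 2 (Abs_fps (\<lambda>i. c $ (2*i))) $ i"
  proof (cases "even i")
    case True thus ?thesis by (auto simp: dil_nth)
  next
    case False
    have "neg c $ i = c $ i" using h by simp
    hence "- c $ i = c $ i" using False by (simp add: neg_nth)
    thus ?thesis using False by (simp add: dil_nth)
  qed
qed

lemma sm_phitheta: "sm 2 (phi * theta)"
  by (rule sm2_neg) (simp add: phi_def neg_mult mult.commute)

lemma VV_dil: "VV = dil 2 (iv (F 1) ^ 4)"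
  by (simp add: VV_def dil_power dil_iv F_dil)

lemma AA_dil: "AA = dil 2 (dil 2 phi)"
  by (simp add: AA_def dil_dil)

lemma W8: "cg 8 (iv (F 1) ^ 4) (theta ^ 2 * iv (F 2) ^ 2)"
proof -
  have e2: "cg 8 (iv (F 1) ^ 8) (iv (F 2) ^ 4)"
    using cg_ivp[OF F_sq3[of 1]] by simp
  have h: "iv (F 1) ^ 4 = iv (F 1) ^ 8 * F 1 ^ 4"
  proof -
    have "iv (F 1) ^ 4 = iv (F 1) ^ 4 * (F 1 ^ 4 * iv (F 1) ^ 4)" by (simp only: Fu_pow mult_1_right)
    also have "\<dots> = iv (F 1) ^ 8 * F 1 ^ 4" by (simp only: power_add[symmetric] mult_ac) simp
    finally show ?thesis .
  qed
  have "cg 8 (iv (F 1) ^ 8 * F 1 ^ 4) (iv (F 2) ^ 4 * F 1 ^ 4)" by (rule cg_multR[OF e2])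
  moreover have "iv (F 2) ^ 4 * F 1 ^ 4 = theta ^ 2 * iv (F 2) ^ 2"
  proof -
    have "F 1 ^ 4 = (F 2 * theta) ^ 2" by (simp only: S1[symmetric] power_mult[symmetric]) simp
    hence "iv (F 2) ^ 4 * F 1 ^ 4 = (F 2 ^ 2 * iv (F 2) ^ 2) * (theta ^ 2 * iv (F 2) ^ 2)"
      by (simp only: power_mult_distrib power_add[symmetric] mult_ac) simp
    thus ?thesis by (simp only: Fu_pow mult_1_left)
  qed
  ultimately show ?thesis unfolding h by simp
qed

lemma theta_sq: "theta ^ 2 = AA ^ 2 + 4 * (fps_X ^ 2 * QQ ^ 2) - 4 * (fps_X * (AA * QQ))"
  unfolding theta_AQ by (simp add: power2_eq_square algebra_simps)

lemma num_nth: "(numeral c * b) $ i = numeral c * (b $ i :: int)"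
  by (simp add: fps_numeral_fps_const)

lemma claim_e: "8 dvd (theta * VV) $ (8*n+4)"
proof -
  define R where "R = dil 2 phi * iv (F 2) ^ 2"
  define E' where "E' = (phi * theta) * iv (F 2) * (dil 2 phi) ^ 2"
  define x where "x = (iv (F 2) * QQ) $ (2*n)"
  define a where "a = (dil 2 phi * iv (F 1) ^ 4) $ (4*n+2)"
  define b where "b = (R * theta ^ 2) $ (4*n+2)"
  define p where "p = (R * QQ ^ 2) $ (4*n)"
  define g where "g = phi * iv (F 1) ^ 2 * (dil 2 phi) ^ 2"
  define y where "y = (E' * AA * QQ) $ (2*n)"
  have sR: "sm 2 R" unfolding R_def using sm_ivF[of 2 1]
    by (intro sm_mult sm_power sm_dil) simp_all
  have sF2: "sm 2 (iv (F 2))" using sm_ivF[of 2 1] by simp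
  have sE: "sm 2 E'" unfolding E'_def
  proof (rule sm_mult)
    show "sm 2 (phi * theta * iv (F 2))" by (rule sm_mult[OF _ sm_phitheta sF2]) simp
    show "sm 2 (dil 2 phi ^ 2)" by (intro sm_power sm_dil) simp
  qed simp
  have E1: "(AA * VV) $ (8*n+4) = a"
  proof -
    have h: "AA * VV = dil 2 (dil 2 phi * iv (F 1) ^ 4)" unfolding AA_dil VV_dil by (simp add: dil_mult)
    have e: "8*n+4 = 2*(4*n+2)" by simp
    show ?thesis unfolding a_def h e by (rule dil_nth_mult) simp
  qed
  have E1b: "(fps_X * (QQ * VV)) $ (8*n+4) = 0"
  proof -
    have e: "8*n+4 = Suc (2*(4*n+1)+1)" by simp
    show ?thesis unfolding e X_Suc using sm_QQ2 sm_VV by (intro sm_nth[of 2]) (auto intro!: sm_mult)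
  qed
  have E2: "8 dvd a - b"
  proof -
    have "cg 8 (dil 2 phi * iv (F 1) ^ 4) (dil 2 phi * (theta ^ 2 * iv (F 2) ^ 2))" by (rule cg_multL[OF W8])
    moreover have "dil 2 phi * (theta ^ 2 * iv (F 2) ^ 2) = R * theta ^ 2" by (simp add: R_def mult_ac)
    ultimately show ?thesis unfolding a_def b_def using cg_nth by fastforce
  qed
  have E3: "b = (R * AA ^ 2) $ (4*n+2) + 4 * p"
  proof -
    have "R * theta ^ 2 = R * AA ^ 2 + 4 * (fps_X ^ 2 * (R * QQ ^ 2)) - 4 * (fps_X * (R * AA * QQ))"
      unfolding theta_sq by (simp add: algebra_simps)
    moreover have "(fps_X ^ 2 * (R * QQ ^ 2)) $ (4*n+2) = p" unfolding p_def by (simp add: fps_X_power_mult_nth)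
    moreover have "(fps_X * (R * AA * QQ)) $ (4*n+2) = 0"
    proof -
      have e: "4*n+2 = Suc (2*(2*n)+1)" by simp
      show ?thesis unfolding e X_Suc using sR sm_AA2 sm_QQ2 by (intro sm_nth[of 2]) (auto intro!: sm_mult)
    qed
    ultimately show ?thesis unfolding b_def by (simp add: num_nth)
  qed
  have E4: "(R * AA ^ 2) $ (4*n+2) = g $ (2*n+1)"
  proof -
    have "R * AA ^ 2 = dil 2 g" unfolding R_def AA_dil g_def
      by (simp add: dil_mult dil_power dil_iv F_dil mult_ac)
    moreover have "4*n+2 = 2*(2*n+1)" by simp
    ultimately show ?thesis by (metis dil_nth_mult zero_less_numeral)
  qed
  have E5: "8 dvd g $ (2*n+1) - (E' * theta ^ 2) $ (2*n+1)"
  proof -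
    have ivF1: "iv (F 1) ^ 2 = iv (F 2) * iv theta"
      using iv_power[of "F 1" 2] iv_mult[of "F 2" theta] S1 theta0 by simp
    have "cg 8 (phi * iv (F 2) * (dil 2 phi) ^ 2 * iv theta) (phi * iv (F 2) * (dil 2 phi) ^ 2 * theta ^ 3)"
      by (rule cg_multL[OF iv_theta])
    moreover have "g = phi * iv (F 2) * (dil 2 phi) ^ 2 * iv theta" unfolding g_def ivF1 by (simp add: mult_ac)
    moreover have "phi * iv (F 2) * (dil 2 phi) ^ 2 * theta ^ 3 = E' * theta ^ 2"
      unfolding E'_def by (simp add: power_Suc[symmetric] mult_ac del: power_Suc)
    ultimately show ?thesis using cg_nth by fastforce
  qed
  have E6: "(E' * theta ^ 2) $ (2*n+1) = - 4 * y"
  proof -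
    have "E' * theta ^ 2 = E' * (AA ^ 2 + 4 * (fps_X ^ 2 * QQ ^ 2)) - 4 * (fps_X * (E' * AA * QQ))"
      unfolding theta_sq by (simp add: algebra_simps)
    moreover have "(E' * (AA ^ 2 + 4 * (fps_X ^ 2 * QQ ^ 2))) $ (2*n+1) = 0"
    proof -
      have sX: "sm 2 (fps_X ^ 2)" using sm_dil[of 2 fps_X] by (simp add: dil_X_power[of 2 1, simplified])
      show ?thesis using sE sm_AA2 sm_QQ2 sX sm_num[of 2]
        by (intro sm_nth[of 2]) (auto intro!: sm_mult sm_power sm_add)
    qed
    moreover have "(fps_X * (E' * AA * QQ)) $ (2*n+1) = y" unfolding y_def by simp
    ultimately show ?thesis by (simp add: num_nth)
  qed
  have E7: "2 dvd y - x"
  proof -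
    have c1: "cg 2 (phi * theta) (1 * 1)" by (rule cg_mult[OF phi_1 theta_1])
    have c2: "cg 2 (dil 2 phi) 1" using cg_dil[OF phi_1, of 2] by simp
    have c3: "cg 2 AA 1" using cg_dil[OF phi_1, of 4] by (simp add: AA_def)
    have "cg 2 (E' * AA * QQ) (((1 * 1) * iv (F 2) * 1 ^ 2) * 1 * QQ)"
      unfolding E'_def by (intro cg_mult cg_power c1 c2 c3 cg_refl)
    thus ?thesis unfolding y_def x_def using cg_nth by fastforce
  qed
  have E8: "2 dvd p - x"
  proof -
    have r1: "cg 2 R (iv (F 4))"
    proof -
      have "cg 2 R (1 * iv (F 2) ^ 2)" unfolding R_def
        using cg_dil[OF phi_1, of 2] by (intro cg_mult cg_refl) simp_all
      moreover have "cg 2 (iv (F 2) ^ 2) (iv (F 4) ^ 1)" using cg_ivp[of 2 2 2 4 1] F_sq[of 2] by simp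
      ultimately show ?thesis using cg_trans by fastforce
    qed
    have q1: "cg 2 (QQ ^ 2) (F 32 ^ 2 * iv (F 16))"
    proof -
      have "QQ ^ 2 = F 16 ^ 4 * iv (F 8) ^ 2" by (simp add: QQ_def power_mult_distrib power_mult[symmetric])
      moreover have "cg 2 (F 16 ^ 4) (F 32 ^ 2)" using cg_dvd[of 2 2] F_sq2[of 16] by simp
      moreover have "cg 2 (iv (F 8) ^ 2) (iv (F 16) ^ 1)" using cg_ivp[of 2 8 2 16 1] F_sq[of 8] by simp
      ultimately show ?thesis using cg_mult by fastforce
    qed
    have "cg 2 (R * QQ ^ 2) (iv (F 4) * (F 32 ^ 2 * iv (F 16)))" by (rule cg_mult[OF r1 q1])
    moreover have "iv (F 4) * (F 32 ^ 2 * iv (F 16)) = dil 2 (iv (F 2) * QQ)"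
      by (simp add: QQ_def dil_mult dil_power dil_iv F_dil mult_ac)
    moreover have "4*n = 2*(2*n)" by simp
    ultimately show ?thesis unfolding p_def x_def using cg_nth by (metis dil_nth_mult zero_less_numeral)
  qed
  have "8 dvd a" using E2 E3 E4 E5 E6 E7 E8 by presburger
  thus ?thesis unfolding T_nth E1 E1b by simp
qed



theorem theorem3p4:
  fixes n :: nat
  shows "d 7 (4 * n + 2) mod 4 = 0 \<and> d 7 (8 * n + 5) mod 4 = 0 \<and> d 7 (16 * n + 9) mod 4 = 0
         \<and> d 7 (4 * n + 3) mod 8 = 0 \<and> d 7 (8 * n + 4) mod 8 = 0"
proof -
  have dc: "d 7 m = (F 2 ^ 7 * iv (F 1) ^ 22) $ m" for m using d_char[of 7 m] by simp
  have h: "8 dvd d 7 m - (theta * VV) $ m" for m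
    unfolding dc VV_def using cg_nth[OF main_red] by simp
  have h4: "4 dvd d 7 m - (theta * VV) $ m" for m
    using h[of m] by presburger
  show ?thesis
    using h4[of "4*n+2"] claim_a[of n] h4[of "8*n+5"] claim_b[of n] h4[of "16*n+9"] claim_c[of n]
      h[of "4*n+3"] claim_d[of n] h[of "8*n+4"] claim_e[of n]
    by presburger
qed


end
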